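(* Let $\mathbf b=\{b_n\}_{n\ge1}$ be a nonnegative real sequence with $\mathbf b\in NBVS$. Then the series $\sum_{n=1}^\infty b_n\sin nx$ converges uniformly on $\mathbb R$ if and only if $\lim_{n\to\infty}nb_n=0$. Moreover, if the series converges at every $x\in\mathbb R$, then its sum function $f(x)=\sum_{n=1}^\infty b_n\sin nx$ is continuous on $\mathbb R$ if and only if $\lim_{n\to\infty}nb_n=0$.
   Context: For $\theta_0\in[0,\pi/2)$ let $M(\theta_0)=\{z\in\mathbb C: |\arg z|\le\theta_0\}$ (with $0\in M(\theta_0)$). Write $\Delta c_n=c_n-c_{n+1}$. A complex sequence $\mathbf C=\{c_n\}$ belongs to $NBVS$ if there is $\theta_0\in[0,\pi/2)$ with $c_n\in M(\theta_0)$ for all $n\ge1$ and a constant $K(\mathbf C)>0$ (depending only on $\mathbf C$) such that $\sum_{n=m}^{2m}|\Delta c_n|\le K(\mathbf C)\big(|c_m|+|c_{2m}|\big)$ for all $m=1,2,\dots$. (For nonnegative real sequences the angular condition is automatic.) *)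

theory Defs
  imports "HOL-Analysis.Analysis"
begin

definition sector :: "real \<Rightarrow> complex set" where
  "sector \<theta>0 = {z. z = 0 \<or> \<bar>Arg z\<bar> \<le> \<theta>0}"

(* Sequences are indexed from 1; the value at index 0 is ignored. *)
definition NBVS :: "(nat \<Rightarrow> complex) \<Rightarrow> bool" where
  "NBVS c \<longleftrightarrow>
     (\<exists>\<theta>0. 0 \<le> \<theta>0 \<and> \<theta>0 < pi / 2 \<and> (\<forall>n\<ge>1. c n \<in> sector \<theta>0)) \<and>
     (\<exists>K>0. \<forall>m\<ge>1. (\<Sum>n=m..2*m. norm (c n - c (Suc n))) \<le> K * (norm (c m) + norm (c (2*m))))"

definition sin_partial :: "(nat \<Rightarrow> real) \<Rightarrow> nat \<Rightarrow> real \<Rightarrow> real" where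
  "sin_partial b N x = (\<Sum>n=1..N. b n * sin (real n * x))"

end

theory Submission
  imports Defs
begin

lemma abs_sin_mult_le: "\<bar>sin (real n * t)\<bar> \<le> real n * \<bar>sin t\<bar>"
proof (induction n)
  case 0 then show ?case by simp
next
  case (Suc n)
  have "sin (real (Suc n) * t) = sin (real n * t) * cos t + cos (real n * t) * sin t"
    by (simp add: distrib_right sin_add)
  then have "\<bar>sin (real (Suc n) * t)\<bar> \<le> \<bar>sin (real n * t)\<bar> * \<bar>cos t\<bar> + \<bar>cos (real n * t)\<bar> * \<bar>sin t\<bar>"
    by (simp add: abs_mult[symmetric]) 
  also have "\<dots> \<le> \<bar>sin (real n * t)\<bar> + \<bar>sin t\<bar>"
    by (intro add_mono mult_left_le mult_left_le_one_le) (auto simp: abs_cos_le_one)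
  finally have "\<bar>sin (real (Suc n) * t)\<bar> \<le> \<bar>sin (real n * t)\<bar> + \<bar>sin t\<bar>" .
  moreover have "real (Suc n) * \<bar>sin t\<bar> = real n * \<bar>sin t\<bar> + \<bar>sin t\<bar>" by (simp add: algebra_simps)
  ultimately show ?case using Suc by linarith
qed

lemma dirichlet_term: "2 * sin (x/2) * sin (real n * x) = cos ((real n - 1/2) * x) - cos ((real n + 1/2) * x)"
proof -
  have "cos ((real n - 1/2) * x) = cos (real n * x - x/2)" by (simp add: algebra_simps)
  moreover have "cos ((real n + 1/2) * x) = cos (real n * x + x/2)" by (simp add: algebra_simps)
  ultimately show ?thesis by (simp add: cos_diff cos_add)
qed

lemma dirichlet_sum:
  assumes "p \<le> q"
  shows "2 * sin (x/2) * (\<Sum>n=p..q. sin (real n * x)) = cos ((real p - 1/2) * x) - cos ((real q + 1/2) * x)"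
  using assms
proof (induction q rule: dec_induct)
  case base then show ?case by (simp add: dirichlet_term)
next
  case (step q)
  have "2 * sin (x/2) * (\<Sum>n=p..Suc q. sin (real n * x)) = 2 * sin (x/2) * (\<Sum>n=p..q. sin (real n * x)) + 2 * sin (x/2) * sin (real (Suc q) * x)"
    using step.hyps by (simp add: algebra_simps)
  also have "\<dots> = cos ((real p - 1/2) * x) - cos ((real (Suc q) + 1/2) * x)"
  proof -
    have "cos ((real (Suc q) - 1/2) * x) = cos ((real q + 1/2) * x)" by (simp add: algebra_simps)
    then show ?thesis using step.IH dirichlet_term[of x "Suc q"] by linarith
  qed
  finally show ?case .
qed

lemma dirichlet_bound:
  assumes "sin (x/2) \<noteq> 0"
  shows "\<bar>\<Sum>n=p..q. sin (real n * x)\<bar> \<le> 1 / \<bar>sin (x/2)\<bar>"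
proof (cases "p \<le> q")
  case True
  have "\<bar>2 * sin (x/2) * (\<Sum>n=p..q. sin (real n * x))\<bar> \<le> 2"
    unfolding dirichlet_sum[OF True]
    using abs_cos_le_one[of "(real p - 1/2) * x"] abs_cos_le_one[of "(real q + 1/2) * x"] by linarith
  then have "\<bar>sin (x/2)\<bar> * \<bar>\<Sum>n=p..q. sin (real n * x)\<bar> \<le> 1" by (simp add: abs_mult)
  then show ?thesis using assms by (simp add: field_simps)
next
  case False then show ?thesis by simp
qed

lemma abel_id:
  fixes a b :: "nat \<Rightarrow> real"
  assumes "p \<le> q"
  shows "(\<Sum>n=p..q. b n * a n) = b q * (\<Sum>i=p..q. a i) + (\<Sum>n=p..<q. (b n - b (Suc n)) * (\<Sum>i=p..n. a i))"
  using assms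
proof (induction q rule: dec_induct)
  case base then show ?case by simp
next
  case (step q)
  have "(\<Sum>n=p..Suc q. b n * a n) = (\<Sum>n=p..q. b n * a n) + b (Suc q) * a (Suc q)"
    using step.hyps by simp
  moreover have "(\<Sum>i=p..Suc q. a i) = (\<Sum>i=p..q. a i) + a (Suc q)" using step.hyps by simp
  moreover have "(\<Sum>n=p..<Suc q. (b n - b (Suc n)) * (\<Sum>i=p..n. a i)) =
      (\<Sum>n=p..<q. (b n - b (Suc n)) * (\<Sum>i=p..n. a i)) + (b q - b (Suc q)) * (\<Sum>i=p..q. a i)"
    using step.hyps by simp
  ultimately show ?case using step.IH by (simp add: algebra_simps)
qed

lemma abel_bound:
  fixes a b :: "nat \<Rightarrow> real"
  assumes "p \<le> q" and D: "\<And>r. p \<le> r \<Longrightarrow> r \<le> q \<Longrightarrow> \<bar>\<Sum>i=p..r. a i\<bar> \<le> D"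
  shows "\<bar>\<Sum>n=p..q. b n * a n\<bar> \<le> D * (\<bar>b q\<bar> + (\<Sum>n=p..<q. \<bar>b n - b (Suc n)\<bar>))"
proof -
  have "\<bar>b q * (\<Sum>i=p..q. a i)\<bar> \<le> \<bar>b q\<bar> * D"
    unfolding abs_mult by (intro mult_left_mono D) (use assms in auto)
  moreover have "\<bar>\<Sum>n=p..<q. (b n - b (Suc n)) * (\<Sum>i=p..n. a i)\<bar> \<le> (\<Sum>n=p..<q. \<bar>b n - b (Suc n)\<bar> * D)"
    by (rule order_trans[OF sum_abs], rule sum_mono) (auto simp: abs_mult intro!: mult_left_mono D)
  moreover have "(\<Sum>n=p..<q. \<bar>b n - b (Suc n)\<bar> * D) = (\<Sum>n=p..<q. \<bar>b n - b (Suc n)\<bar>) * D"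
    by (simp add: sum_distrib_right)
  ultimately show ?thesis unfolding abel_id[OF assms(1)]
    using abs_triangle_ineq[of "b q * (\<Sum>i=p..q. a i)" "\<Sum>n=p..<q. (b n - b (Suc n)) * (\<Sum>i=p..n. a i)"]
    by (simp add: algebra_simps)
qed

lemma var_tail:
  fixes b :: "nat \<Rightarrow> real"
  assumes K: "\<And>m. m \<ge> 1 \<Longrightarrow> (\<Sum>n=m..2*m. \<bar>b n - b (Suc n)\<bar>) \<le> K * (\<bar>b m\<bar> + \<bar>b (2*m)\<bar>)"
    and Kpos: "K \<ge> 0" and A1: "A \<ge> 1" and e: "\<And>n. n \<ge> A \<Longrightarrow> \<bar>b n\<bar> \<le> e / real n"
  shows "(\<Sum>n=A..<q. \<bar>b n - b (Suc n)\<bar>) \<le> 3 * K * e / A"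
proof -
  have "0 \<le> e / real A" using e[of A] by (meson abs_ge_zero order_trans le_refl)
  then have e0: "e \<ge> 0" using A1 by (simp add: zero_le_divide_iff)
  have dy: "(\<Sum>n=A..<2^J*A. \<bar>b n - b (Suc n)\<bar>) \<le> 3*K*e/A - 3*K*e/(2^J*A)" for J
  proof (induction J)
    case 0 then show ?case by simp
  next
    case (Suc J)
    define m where "m = 2^J*A"
    have m1: "m \<ge> 1" using A1 by (simp add: m_def)
    have mA: "m \<ge> A" by (simp add: m_def)
    have m2: "2^Suc J * A = 2*m" by (simp add: m_def)
    have s1: "(\<Sum>n=A..<2*m. \<bar>b n - b (Suc n)\<bar>) = (\<Sum>n=A..<m. \<bar>b n - b (Suc n)\<bar>) + (\<Sum>n=m..<2*m. \<bar>b n - b (Suc n)\<bar>)"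
      by (rule sum.atLeastLessThan_concat[symmetric]) (use mA in auto)
    have s2: "(\<Sum>n=m..<2*m. \<bar>b n - b (Suc n)\<bar>) \<le> (\<Sum>n=m..2*m. \<bar>b n - b (Suc n)\<bar>)"
      by (rule sum_mono2) auto
    have s3: "K * (\<bar>b m\<bar> + \<bar>b (2*m)\<bar>) \<le> K * (e / m + e / (2*m))"
    proof -
      have "\<bar>b m\<bar> \<le> e / m" using e[of m] mA by blast
      moreover have "\<bar>b (2*m)\<bar> \<le> e / (2*m)" using e[of "2*m"] mA by simp
      ultimately show ?thesis using Kpos by (intro mult_left_mono) auto
    qed
    define c where "c = K * e / real m"
    have c1: "3*K*e/(2^J*A) = 3 * c" by (simp add: c_def m_def)
    have c2: "K * (e / m + e / (2*m)) = 3/2 * c" by (simp add: c_def field_simps)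
    have c3: "3*K*e/(2^Suc J*A) = 3/2 * c" by (simp add: c_def m_def field_simps)
    have "(\<Sum>n=A..<2^Suc J*A. \<bar>b n - b (Suc n)\<bar>) = (\<Sum>n=A..<2*m. \<bar>b n - b (Suc n)\<bar>)" by (simp only: m2)
    then show ?case using Suc.IH s1 s2 s3 K[OF m1] c1 c2 c3 unfolding m_def by linarith
  qed
  have "q < 2^q" by (rule less_exp)
  moreover have "(2::nat)^q \<le> 2^q * A" using A1 by simp
  ultimately have "q \<le> 2^q*A" by linarith
  then have "(\<Sum>n=A..<q. \<bar>b n - b (Suc n)\<bar>) \<le> (\<Sum>n=A..<2^q*A. \<bar>b n - b (Suc n)\<bar>)"
    by (intro sum_mono2) auto
  also have "\<dots> \<le> 3*K*e/A - 3*K*e/(2^q*A)" by (rule dy)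
  also have "\<dots> \<le> 3*K*e/A" using Kpos e0 by simp
  finally show ?thesis .
qed

lemma unif_bound:
  fixes b :: "nat \<Rightarrow> real"
  assumes K: "\<And>m. m \<ge> 1 \<Longrightarrow> (\<Sum>n=m..2*m. \<bar>b n - b (Suc n)\<bar>) \<le> K * (\<bar>b m\<bar> + \<bar>b (2*m)\<bar>)"
    and Kpos: "K \<ge> 0" and M1: "M \<ge> 1" and e: "\<And>n. n \<ge> M \<Longrightarrow> \<bar>b n\<bar> \<le> e / real n"
    and pM: "M \<le> p"
  shows "\<bar>\<Sum>n=p..q. b n * sin (real n * x)\<bar> \<le> (3*K+3) * e"
proof -
  have "0 \<le> e / real M" using e[of M] by (meson abs_ge_zero order_trans le_refl)
  then have e0: "e \<ge> 0" using M1 by (simp add: zero_le_divide_iff)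
  define s where "s = \<bar>sin (x/2)\<bar>"
  have sinb: "\<bar>sin (real n * x)\<bar> \<le> 2 * real n * s" for n
  proof -
    have "real (2*n) * (x/2) = real n * x" by simp
    then show ?thesis using abs_sin_mult_le[of "2*n" "x/2"] by (simp add: s_def)
  qed
  show ?thesis
  proof (cases "s = 0")
    case True
    then have z: "b n * sin (real n * x) = 0" for n using sinb[of n] by simp
    have "(\<Sum>n=p..q. b n * sin (real n * x)) = 0" by (simp only: z sum.neutral_const)
    then show ?thesis using Kpos e0 by simp
  next
    case False
    then have s0: "s > 0" by (simp add: s_def)
    define N where "N = nat \<lfloor>1/s\<rfloor>"
    have N1: "real N \<le> 1/s" using s0 by (simp add: N_def)
    have N2: "1/s < real N + 1" using s0 by (simp add: N_def)
    define g where "g n = b n * sin (real n * x)" for n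
    define H where "H = {n\<in>{p..q}. n \<le> N}"
    define T where "T = {n\<in>{p..q}. N < n}"
    have spl: "{p..q} = H \<union> T" "H \<inter> T = {}" by (auto simp: H_def T_def)
    have sumspl: "(\<Sum>n=p..q. g n) = sum g H + sum g T"
      unfolding spl(1) by (rule sum.union_disjoint) (auto simp: H_def T_def)
    have head: "\<bar>sum g H\<bar> \<le> 2 * e"
    proof -
      have "\<bar>sum g H\<bar> \<le> (\<Sum>n\<in>H. 2 * e * s)"
      proof (rule order_trans[OF sum_abs], rule sum_mono)
        fix n assume n: "n \<in> H"
        then have n1: "n \<ge> M" "real n > 0" using pM M1 by (auto simp: H_def)
        have "\<bar>g n\<bar> = \<bar>b n\<bar> * \<bar>sin (real n * x)\<bar>" by (simp add: g_def abs_mult)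
        also have "\<dots> \<le> (e / real n) * (2 * real n * s)"
          by (intro mult_mono e sinb) (use n1 e0 in auto)
        also have "\<dots> = 2 * e * s" using n1 by simp
        finally show "\<bar>g n\<bar> \<le> 2 * e * s" .
      qed
      also have "\<dots> = real (card H) * (2 * e * s)" by simp
      also have "\<dots> \<le> real N * (2 * e * s)"
      proof -
        have "H \<subseteq> {1..N}" using pM M1 by (auto simp: H_def)
        then have "card H \<le> N" using card_mono[of "{1..N}" H] by simp
        then show ?thesis using e0 s0 by (intro mult_right_mono) auto
      qed
      also have "\<dots> \<le> (1/s) * (2 * e * s)" using N1 e0 s0 by (intro mult_right_mono) auto
      also have "\<dots> = 2 * e" using s0 by simp
      finally show ?thesis .
    qed
    have tail: "\<bar>sum g T\<bar> \<le> (3*K+1) * e"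
    proof (cases "T = {}")
      case True then show ?thesis using Kpos e0 by simp
    next
      case False
      define A where "A = max p (Suc N)"
      have TA: "T = {A..q}" by (auto simp: T_def A_def)
      have Aq: "A \<le> q" using False TA by auto
      have AM: "A \<ge> M" "A \<ge> 1" using pM M1 by (auto simp: A_def)
      have sx: "sin (x/2) \<noteq> 0" using s0 s_def by auto
      have "\<bar>sum g T\<bar> \<le> (1/s) * (\<bar>b q\<bar> + (\<Sum>n=A..<q. \<bar>b n - b (Suc n)\<bar>))"
        unfolding TA g_def
        by (rule abel_bound[OF Aq]) (use dirichlet_bound[OF sx] s_def in auto)
      also have "\<dots> \<le> (1/s) * (e / A + 3 * K * e / A)"
      proof -
        have "\<bar>b q\<bar> \<le> e / q" using e[of q] Aq AM by auto
        also have "\<dots> \<le> e / A" using Aq AM e0 by (intro divide_left_mono) auto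
        finally have "\<bar>b q\<bar> \<le> e / A" .
        moreover have "(\<Sum>n=A..<q. \<bar>b n - b (Suc n)\<bar>) \<le> 3 * K * e / A"
          by (rule var_tail[OF K Kpos AM(2)]) (use e AM in auto)
        ultimately show ?thesis using s0 by (intro mult_left_mono) auto
      qed
      also have "\<dots> = (3*K+1) * e * (1 / (s * A))" using s0 AM by (simp add: field_simps)
      also have "\<dots> \<le> (3*K+1) * e * 1"
      proof -
        have "real A \<ge> real N + 1" by (simp add: A_def)
        then have "1/s < real A" using N2 by linarith
        then have "s * A > 1" using s0 by (simp add: field_simps)
        then have "1 / (s * A) \<le> 1" by simp
        then show ?thesis using Kpos e0 by (intro mult_left_mono) auto
      qed
      finally show ?thesis by simp
    qed
    have "\<bar>\<Sum>n=p..q. g n\<bar> \<le> 2 * e + (3*K+1) * e" using head tail sumspl by linarith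
    then show ?thesis by (simp add: g_def algebra_simps)
  qed
qed

lemma unif_conv:
  fixes b :: "nat \<Rightarrow> real"
  assumes K: "\<And>m. m \<ge> 1 \<Longrightarrow> (\<Sum>n=m..2*m. \<bar>b n - b (Suc n)\<bar>) \<le> K * (\<bar>b m\<bar> + \<bar>b (2*m)\<bar>)"
    and Kpos: "K \<ge> 0" and lim: "(\<lambda>n. real n * b n) \<longlonglongrightarrow> 0"
  shows "uniformly_convergent_on UNIV (sin_partial b)"
proof -
  have "uniformly_Cauchy_on UNIV (sin_partial b)"
  proof (rule uniformly_Cauchy_onI')
    fix \<epsilon> :: real assume \<epsilon>: "\<epsilon> > 0"
    define e where "e = \<epsilon> / (3*K+4)"
    have e0: "e > 0" using \<epsilon> Kpos by (simp add: e_def)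
    have ee: "(3*K+3) * e < \<epsilon>" using \<epsilon> Kpos by (simp add: e_def field_simps)
    from lim e0 obtain M0 where M0: "\<And>n. n \<ge> M0 \<Longrightarrow> \<bar>real n * b n\<bar> < e"
      unfolding LIMSEQ_iff by auto
    define M where "M = max M0 1"
    have M1: "M \<ge> 1" by (simp add: M_def)
    have eb: "\<bar>b n\<bar> \<le> e / real n" if "n \<ge> M" for n
    proof -
      have n0: "real n > 0" using that M1 by simp
      have "\<bar>real n * b n\<bar> < e" using M0 that by (simp add: M_def)
      then have "real n * \<bar>b n\<bar> \<le> e" by (simp add: abs_mult)
      then show ?thesis using n0 by (simp add: field_simps)
    qed
    show "\<exists>M. \<forall>x\<in>UNIV. \<forall>m\<ge>M. \<forall>n>m. dist (sin_partial b m x) (sin_partial b n x) < \<epsilon>"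
    proof (intro exI ballI allI impI)
      fix x m n assume mM: "m \<ge> M" and mn: "n > m"
      then obtain d where d: "n = m + d" using less_imp_add_positive by blast
      have "sin_partial b n x = sin_partial b m x + (\<Sum>k=Suc m..n. b k * sin (real k * x))"
        unfolding sin_partial_def d using sum.ub_add_nat[of 1 m "\<lambda>k. b k * sin (real k * x)" d] by simp
      then have "dist (sin_partial b m x) (sin_partial b n x) = \<bar>\<Sum>k=Suc m..n. b k * sin (real k * x)\<bar>"
        by (simp add: dist_real_def)
      also have "\<dots> \<le> (3*K+3) * e" by (rule unif_bound[OF K Kpos M1 eb]) (use mM in auto)
      finally show "dist (sin_partial b m x) (sin_partial b n x) < \<epsilon>" using ee by linarith
    qed
  qed
  then show ?thesis by (rule Cauchy_uniformly_convergent)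
qed

lemma tele_abs:
  fixes b :: "nat \<Rightarrow> real"
  assumes "j \<le> k"
  shows "\<bar>b j - b k\<bar> \<le> (\<Sum>i=j..<k. \<bar>b i - b (Suc i)\<bar>)"
  using assms
proof (induction k rule: dec_induct)
  case base then show ?case by simp
next
  case (step k)
  then show ?case using abs_triangle_ineq[of "b j - b k" "b k - b (Suc k)"] by simp
qed

lemma bk_le:
  fixes b :: "nat \<Rightarrow> real"
  assumes K: "\<And>m. m \<ge> 1 \<Longrightarrow> (\<Sum>n=m..2*m. \<bar>b n - b (Suc n)\<bar>) \<le> K * (\<bar>b m\<bar> + \<bar>b (2*m)\<bar>)"
    and j: "j \<ge> 1" "j \<le> k" "k \<le> 2*j"
  shows "\<bar>b k\<bar> \<le> (K+1) * \<bar>b j\<bar> + K * \<bar>b (2*j)\<bar>"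
proof -
  have "\<bar>b j - b k\<bar> \<le> (\<Sum>i=j..<k. \<bar>b i - b (Suc i)\<bar>)" by (rule tele_abs) (use j in auto)
  also have "\<dots> \<le> (\<Sum>i=j..2*j. \<bar>b i - b (Suc i)\<bar>)" by (rule sum_mono2) (use j in auto)
  also have "\<dots> \<le> K * (\<bar>b j\<bar> + \<bar>b (2*j)\<bar>)" by (rule K) (use j in auto)
  finally have 1: "\<bar>b j - b k\<bar> \<le> K * (\<bar>b j\<bar> + \<bar>b (2*j)\<bar>)" .
  have 2: "\<bar>b k\<bar> - \<bar>b j\<bar> \<le> \<bar>b j - b k\<bar>" using abs_triangle_ineq2[of "b k" "b j"] by (simp add: abs_minus_commute)
  show ?thesis using 1 2 by (simp add: algebra_simps)
qed

lemma terms_to_0: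
  assumes "convergent (\<lambda>N. sin_partial b N x)"
  shows "(\<lambda>N. b (Suc N) * sin (real (Suc N) * x)) \<longlonglongrightarrow> 0"
proof -
  from assms obtain L where L: "(\<lambda>N. sin_partial b N x) \<longlonglongrightarrow> L" by (auto simp: convergent_def)
  have "(\<lambda>N. sin_partial b (Suc N) x - sin_partial b N x) \<longlonglongrightarrow> L - L"
    by (intro tendsto_diff LIMSEQ_Suc L)
  moreover have "sin_partial b (Suc N) x - sin_partial b N x = b (Suc N) * sin (real (Suc N) * x)" for N
    by (simp add: sin_partial_def)
  ultimately show ?thesis by simp
qed

lemma abs_sin_odd: "\<bar>sin (real (2*j+1) * (pi/2))\<bar> = 1"
proof -
  have "sin (real (2*j+1) * (pi/2)) = sin (real j * pi + pi/2)"
    by (rule arg_cong[where f=sin]) (simp add: algebra_simps)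
  also have "\<dots> = cos (real j * pi)" by (simp add: sin_add)
  also have "\<dots> = (-1)^j" by simp
  finally show ?thesis by (simp add: power_abs)
qed

lemma b_to_0:
  fixes b :: "nat \<Rightarrow> real"
  assumes K: "\<And>m. m \<ge> 1 \<Longrightarrow> (\<Sum>n=m..2*m. \<bar>b n - b (Suc n)\<bar>) \<le> K * (\<bar>b m\<bar> + \<bar>b (2*m)\<bar>)"
    and Kpos: "K \<ge> 0"
    and conv: "\<And>x. convergent (\<lambda>N. sin_partial b N x)"
  shows "b \<longlonglongrightarrow> 0"
proof -
  have od: "(\<lambda>j. \<bar>b (2*j+1)\<bar>) \<longlonglongrightarrow> 0"
  proof -
    have "(\<lambda>N. b (Suc N) * sin (real (Suc N) * (pi/2))) \<longlonglongrightarrow> 0" by (rule terms_to_0[OF conv])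
    from LIMSEQ_subseq_LIMSEQ[OF this, of "\<lambda>j. 2*j"]
    have "(\<lambda>j. b (Suc (2*j)) * sin (real (Suc (2*j)) * (pi/2))) \<longlonglongrightarrow> 0"
      by (simp add: strict_mono_def o_def)
    then have "(\<lambda>j. \<bar>b (Suc (2*j)) * sin (real (Suc (2*j)) * (pi/2))\<bar>) \<longlonglongrightarrow> 0"
      by (simp only: tendsto_rabs_zero_iff)
    moreover have "\<bar>b (Suc (2*j)) * sin (real (Suc (2*j)) * (pi/2))\<bar> = \<bar>b (2*j+1)\<bar>" for j
      using abs_sin_odd[of j] by (simp add: abs_mult)
    ultimately show ?thesis by simp
  qed
  have ev: "(\<lambda>j. \<bar>b (4*j+2)\<bar>) \<longlonglongrightarrow> 0"
  proof -
    have "(\<lambda>N. b (Suc N) * sin (real (Suc N) * (pi/4))) \<longlonglongrightarrow> 0" by (rule terms_to_0[OF conv])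
    from LIMSEQ_subseq_LIMSEQ[OF this, of "\<lambda>j. 4*j+1"]
    have "(\<lambda>j. b (Suc (4*j+1)) * sin (real (Suc (4*j+1)) * (pi/4))) \<longlonglongrightarrow> 0"
      by (simp add: strict_mono_def o_def)
    then have "(\<lambda>j. \<bar>b (Suc (4*j+1)) * sin (real (Suc (4*j+1)) * (pi/4))\<bar>) \<longlonglongrightarrow> 0"
      by (simp only: tendsto_rabs_zero_iff)
    moreover have "\<bar>b (Suc (4*j+1)) * sin (real (Suc (4*j+1)) * (pi/4))\<bar> = \<bar>b (4*j+2)\<bar>" for j
    proof -
      have eq: "real (Suc (4*j+1)) * (pi/4) = real (2*j+1) * (pi/2)" by (simp add: algebra_simps)
      have "\<bar>sin (real (Suc (4*j+1)) * (pi/4))\<bar> = 1" unfolding eq by (rule abs_sin_odd)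
      then show ?thesis by (simp only: abs_mult) simp
    qed
    ultimately show ?thesis by simp
  qed
  show ?thesis unfolding LIMSEQ_iff
  proof (intro allI impI)
    fix r :: real assume r: "r > 0"
    define r' where "r' = r / (2*K+2)"
    have r': "r' > 0" "(2*K+1) * r' < r" using r Kpos by (auto simp: r'_def field_simps)
    obtain J1 where J1: "\<And>j. j \<ge> J1 \<Longrightarrow> \<bar>b (2*j+1)\<bar> < r'"
      using od r'(1) unfolding LIMSEQ_iff by force
    obtain J2 where J2: "\<And>j. j \<ge> J2 \<Longrightarrow> \<bar>b (4*j+2)\<bar> < r'"
      using ev r'(1) unfolding LIMSEQ_iff by force
    show "\<exists>no. \<forall>n\<ge>no. norm (b n - 0) < r"
    proof (intro exI allI impI)
      fix n assume n: "n \<ge> 2*(J1+J2)+2"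
      show "norm (b n - 0) < r"
      proof (cases "odd n")
        case True
        then obtain j where j: "n = 2*j+1" by (metis oddE)
        then have "j \<ge> J1" using n by simp
        then have "\<bar>b n\<bar> < r'" using J1 j by simp
        moreover have "r' \<le> (2*K+1) * r'" using r' Kpos by (simp add: algebra_simps)
        ultimately have "\<bar>b n\<bar> < r" using r' by linarith
        then show ?thesis by simp
      next
        case False
        then obtain k where k: "n = 2*k" by (auto elim!: evenE)
        define j where "j = k - 1"
        have j: "n = 2*j+2" using k n by (cases k) (auto simp: j_def)
        then have jj: "j \<ge> J1" "j \<ge> J2" using n by auto
        have "\<bar>b n\<bar> \<le> (K+1) * \<bar>b (2*j+1)\<bar> + K * \<bar>b (2*(2*j+1))\<bar>"
          by (rule bk_le[OF K]) (use j in auto)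
        also have "\<dots> \<le> (K+1) * r' + K * r'"
        proof -
          have "\<bar>b (2*j+1)\<bar> \<le> r'" using J1 jj by (simp add: less_imp_le)
          moreover have "\<bar>b (2*(2*j+1))\<bar> \<le> r'" using J2[of j] jj by (simp add: algebra_simps)
          ultimately show ?thesis using Kpos by (intro add_mono mult_left_mono) auto
        qed
        finally show ?thesis using r' by (simp add: algebra_simps)
      qed
    qed
  qed
qed

lemma sin_minus_x_bound: fixes u :: real shows "\<bar>sin u - u\<bar> \<le> \<bar>u\<bar>^3 / 6"
proof -
  have "(\<Sum>m<3. sin_coeff m * u ^ m) = u" by (simp add: sin_coeff_def numeral_3_eq_3)
  then have "\<bar>sin u - u\<bar> \<le> inverse (fact 3) * \<bar>u\<bar>^3" using Maclaurin_sin_bound[of u 3] by simp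
  moreover have "(fact 3::real) = 6" by (simp add: fact_numeral)
  ultimately have "\<bar>sin u - u\<bar> \<le> inverse 6 * \<bar>u\<bar>^3" by simp
  then show ?thesis by (simp add: field_simps)
qed

lemma one_minus_cos_bound: fixes u :: real shows "\<bar>1 - cos u\<bar> \<le> u^2 / 2"
proof -
  have "cos u = cos (2 * (u/2))" by simp
  also have "\<dots> = 1 - 2 * sin (u/2) ^ 2" by (rule cos_double_sin)
  finally have "\<bar>1 - cos u\<bar> = 2 * sin (u/2) ^ 2" by simp
  also have "\<dots> \<le> 2 * (u/2)^2"
  proof -
    have "\<bar>sin (u/2)\<bar> \<le> \<bar>u/2\<bar>" by (rule abs_sin_x_le_abs_x)
    then have "sin (u/2)^2 \<le> (u/2)^2" by (metis abs_le_square_iff)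
    then show ?thesis by simp
  qed
  also have "\<dots> = u^2/2" by (simp add: power2_eq_square)
  finally show ?thesis .
qed

lemma sinc_deriv:
  fixes u :: real
  assumes "u \<noteq> 0"
  shows "((\<lambda>u. sin u / u) has_real_derivative ((u * cos u - sin u) / u^2)) (at u)"
  using assms by (auto intro!: derivative_eq_intros simp: power2_eq_square field_simps)

lemma sinc_deriv_bound1:
  fixes u :: real
  assumes "u > 0" shows "\<bar>(u * cos u - sin u) / u^2\<bar> \<le> 2"
proof -
  have u2: "u^2 > 0" using assms by simp
  have "\<bar>u * cos u - sin u\<bar> \<le> 2 * u^2"
  proof (cases "u \<ge> 1")
    case True
    have "\<bar>u * cos u - sin u\<bar> \<le> \<bar>u * cos u\<bar> + \<bar>sin u\<bar>" by (rule abs_triangle_ineq4)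
    moreover have "\<bar>u * cos u\<bar> \<le> u" using abs_cos_le_one[of u] assms by (simp add: abs_mult mult_left_le)
    moreover have "\<bar>sin u\<bar> \<le> 1" by (rule abs_sin_le_one)
    moreover have "u \<le> u^2" using True by (simp add: power2_eq_square)
    ultimately show ?thesis using True by linarith
  next
    case False
    have "\<bar>u * cos u - sin u\<bar> \<le> u * \<bar>1 - cos u\<bar> + \<bar>sin u - u\<bar>"
    proof -
      have "u * cos u - sin u = - (u * (1 - cos u)) - (sin u - u)" by (simp add: algebra_simps)
      then have "\<bar>u * cos u - sin u\<bar> \<le> \<bar>- (u * (1 - cos u))\<bar> + \<bar>sin u - u\<bar>"
        using abs_triangle_ineq4[of "- (u * (1 - cos u))" "sin u - u"] by simp
      then show ?thesis using assms by (simp add: abs_mult)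
    qed
    also have "\<dots> \<le> u * (u^2/2) + \<bar>u\<bar>^3/6"
      using one_minus_cos_bound[of u] sin_minus_x_bound[of u] assms
      by (intro add_mono mult_left_mono) auto
    also have "\<dots> \<le> 2 * u^2"
    proof -
      have "u^3 \<le> u^2" using False assms by (simp add: power3_eq_cube power2_eq_square)
      then show ?thesis using assms by (simp add: power3_eq_cube power2_eq_square)
    qed
    finally show ?thesis .
  qed
  then show ?thesis using u2 by (simp add: abs_divide divide_le_eq)
qed

lemma sinc_deriv_bound2:
  fixes u :: real
  assumes "u \<ge> 1" shows "\<bar>(u * cos u - sin u) / u^2\<bar> \<le> 2 / u"
proof -
  have u0: "u > 0" using assms by simp
  have "\<bar>u * cos u - sin u\<bar> \<le> \<bar>u * cos u\<bar> + \<bar>sin u\<bar>" by (rule abs_triangle_ineq4)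
  moreover have "\<bar>u * cos u\<bar> \<le> u" using abs_cos_le_one[of u] u0 by (simp add: abs_mult mult_left_le)
  moreover have "\<bar>sin u\<bar> \<le> 1" by (rule abs_sin_le_one)
  ultimately have "\<bar>u * cos u - sin u\<bar> \<le> 2 * u" using assms by linarith
  then have "\<bar>u * cos u - sin u\<bar> / u^2 \<le> 2 * u / u^2" using u0 by (intro divide_right_mono) auto
  also have "2 * u / u^2 = 2 / u" using u0 by (simp add: power2_eq_square)
  finally show ?thesis by (simp add: abs_divide)
qed

lemma sinc_lip:
  fixes t h :: real
  assumes t: "t > 0" and h: "h > 0"
  shows "\<bar>sin (t+h)/(t+h) - sin t / t\<bar> \<le> 2*h"
    and "t \<ge> 1 \<Longrightarrow> \<bar>sin (t+h)/(t+h) - sin t / t\<bar> \<le> 2*h/t"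
proof -
  obtain z where z: "t < z" "z < t + h"
    and eq: "sin (t+h)/(t+h) - sin t / t = (t + h - t) * ((z * cos z - sin z) / z^2)"
    using MVT2[of t "t+h" "\<lambda>u. sin u / u" "\<lambda>u. (u * cos u - sin u) / u^2"] h t sinc_deriv by force
  have z0: "z > 0" using z t by simp
  have ab: "\<bar>sin (t+h)/(t+h) - sin t / t\<bar> = h * \<bar>(z * cos z - sin z) / z^2\<bar>"
    unfolding eq using h by (simp add: abs_mult)
  show "\<bar>sin (t+h)/(t+h) - sin t / t\<bar> \<le> 2*h"
    unfolding ab using mult_left_mono[OF sinc_deriv_bound1[OF z0], of h] h by simp
  assume t1: "t \<ge> 1"
  have "\<bar>(z * cos z - sin z) / z^2\<bar> \<le> 2 / z" by (rule sinc_deriv_bound2) (use z t1 in simp)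
  also have "\<dots> \<le> 2 / t" using z t by (intro divide_left_mono) auto
  finally have "h * \<bar>(z * cos z - sin z) / z^2\<bar> \<le> h * (2 / t)" using h by (intro mult_left_mono) auto
  then show "\<bar>sin (t+h)/(t+h) - sin t / t\<bar> \<le> 2*h/t" unfolding ab by (simp add: mult.commute)
qed

lemma sinc_abs_le:
  fixes u :: real
  assumes "u > 0" shows "\<bar>sin u / u\<bar> \<le> 1" "\<bar>sin u / u\<bar> \<le> 1 / u"
proof -
  show "\<bar>sin u / u\<bar> \<le> 1" using abs_sin_x_le_abs_x[of u] assms by (simp add: abs_divide divide_le_eq)
  show "\<bar>sin u / u\<bar> \<le> 1 / u" using abs_sin_le_one[of u] assms by (simp add: abs_divide divide_right_mono)
qed

lemma phi_lip:
  fixes t h :: real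
  assumes t: "t > 0" and h: "h > 0"
  shows "\<bar>(sin (t+h)/(t+h))^2 - (sin t / t)^2\<bar> \<le> 4*h"
    and "t \<ge> 1 \<Longrightarrow> \<bar>(sin (t+h)/(t+h))^2 - (sin t / t)^2\<bar> \<le> 4*h/t^2"
proof -
  define a where "a = sin (t+h)/(t+h)"
  define b where "b = sin t / t"
  have th: "t + h > 0" using t h by simp
  have fac: "\<bar>a^2 - b^2\<bar> = \<bar>a - b\<bar> * \<bar>a + b\<bar>" by (simp add: power2_eq_square algebra_simps abs_mult[symmetric])
  have "\<bar>a + b\<bar> \<le> 2" using sinc_abs_le(1)[OF th] sinc_abs_le(1)[OF t] unfolding a_def b_def
    using abs_triangle_ineq[of "sin (t+h)/(t+h)" "sin t / t"] by linarith
  then show "\<bar>(sin (t+h)/(t+h))^2 - (sin t / t)^2\<bar> \<le> 4*h"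
    using sinc_lip(1)[OF t h] unfolding fac[unfolded a_def b_def]
    using mult_mono[of "\<bar>a - b\<bar>" "2*h" "\<bar>a + b\<bar>" 2] unfolding a_def b_def by simp
  assume t1: "t \<ge> 1"
  have "\<bar>a\<bar> \<le> 1 / (t+h)" using sinc_abs_le(2)[OF th] by (simp add: a_def)
  also have "\<dots> \<le> 1 / t" using t h by (intro divide_left_mono) auto
  finally have "\<bar>a + b\<bar> \<le> 2 / t" using sinc_abs_le(2)[OF t] abs_triangle_ineq[of a b] unfolding b_def by linarith
  moreover have "\<bar>a - b\<bar> \<le> 2*h/t" using sinc_lip(2)[OF t h t1] by (simp add: a_def b_def)
  ultimately have "\<bar>a - b\<bar> * \<bar>a + b\<bar> \<le> (2*h/t) * (2/t)" by (intro mult_mono) auto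
  also have "\<dots> = 4*h/t^2" by (simp add: power2_eq_square)
  finally show "\<bar>(sin (t+h)/(t+h))^2 - (sin t / t)^2\<bar> \<le> 4*h/t^2" using fac by (simp add: a_def b_def)
qed

lemma sinc_near_1:
  fixes u :: real
  assumes "u > 0" shows "\<bar>sin u / u - 1\<bar> \<le> u^2 / 6"
proof -
  have "sin u / u - 1 = (sin u - u) / u" using assms by (simp add: field_simps)
  then have "\<bar>sin u / u - 1\<bar> = \<bar>sin u - u\<bar> / u" using assms by (simp add: abs_divide)
  also have "\<dots> \<le> (\<bar>u\<bar>^3 / 6) / u" using sin_minus_x_bound[of u] assms by (intro divide_right_mono) auto
  also have "\<dots> = u^2/6" using assms by (simp add: power3_eq_cube power2_eq_square)
  finally show ?thesis .
qed

definition wf :: "real \<Rightarrow> nat \<Rightarrow> real" where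
  "wf h n = (if n = 0 then 1 else (sin (real n * h) / (real n * h))^2)"

lemma wf_abs_le: assumes "h > 0" shows "\<bar>wf h n\<bar> \<le> 1"
proof (cases "n = 0")
  case False
  then have "real n * h > 0" using assms by simp
  from sinc_abs_le(1)[OF this] have "\<bar>sin (real n * h) / (real n * h)\<bar> \<le> 1" .
  then have "(sin (real n * h) / (real n * h))^2 \<le> 1" by (simp add: abs_square_le_1)
  then show ?thesis using False by (simp add: wf_def)
qed (simp add: wf_def)

lemma w_var:
  fixes h :: real assumes h: "0 < h" "h \<le> 1"
  shows "(\<Sum>n<N. \<bar>wf h n - wf h (Suc n)\<bar>) \<le> 17"
proof -
  define P where "P n = (if real n * h < 1 then 16 - 4 * (real n * h) else 8 / (real n * h))" for n :: nat
  have P0: "0 \<le> P n" for n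
  proof (cases "real n * h < 1")
    case True
    have "P n = 16 - 4 * (real n * h)" using True by (simp add: P_def)
    then show ?thesis using True by linarith
  next
    case False then have "real n * h > 0" by simp
    then show ?thesis using False by (simp add: P_def)
  qed
  have P1: "P 1 \<le> 16" using h by (simp add: P_def)
  have step: "\<bar>wf h (Suc n) - wf h (Suc (Suc n))\<bar> \<le> P (Suc n) - P (Suc (Suc n))" for n
  proof -
    define t where "t = real (Suc n) * h"
    have t0: "t > 0" using h by (simp add: t_def)
    have tt: "real (Suc (Suc n)) * h = t + h" by (simp add: t_def algebra_simps)
    have ww: "\<bar>wf h (Suc n) - wf h (Suc (Suc n))\<bar> = \<bar>(sin (t+h)/(t+h))^2 - (sin t / t)^2\<bar>"
      unfolding wf_def t_def[symmetric] tt by (simp add: abs_minus_commute)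
    have PS: "P (Suc n) = (if t < 1 then 16 - 4 * t else 8 / t)" by (simp only: P_def t_def)
    have PSS: "P (Suc (Suc n)) = (if t + h < 1 then 16 - 4 * (t+h) else 8 / (t+h))" by (simp only: P_def tt)
    show ?thesis
    proof (cases "t < 1")
      case True
      show ?thesis
      proof (cases "t + h < 1")
        case True
        then show ?thesis using \<open>t < 1\<close> ww PS PSS phi_lip(1)[OF t0 h(1)] by simp
      next
        case False
        then have "8 / (t+h) \<le> 8" by (simp add: divide_le_eq)
        then have "4 * h \<le> P (Suc n) - P (Suc (Suc n))" using \<open>t < 1\<close> False PS PSS h by simp
        then show ?thesis using ww phi_lip(1)[OF t0 h(1)] by linarith
      qed
    next
      case False
      then have t1: "t \<ge> 1" by simp
      have "4*h/t^2 = 8*h/(t*(2*t))" by (simp add: power2_eq_square)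
      also have "\<dots> \<le> 8*h/(t*(t+h))" using t0 h t1
        by (intro divide_left_mono mult_left_mono mult_pos_pos) auto
      also have "\<dots> = 8 / t - 8 / (t+h)" using t0 h by (simp add: field_simps)
      also have "\<dots> = P (Suc n) - P (Suc (Suc n))" using t1 h PS PSS by simp
      finally show ?thesis using ww phi_lip(2)[OF t0 h(1) t1] by linarith
    qed
  qed
  show ?thesis
  proof (cases N)
    case 0 then show ?thesis by simp
  next
    case (Suc M)
    have f0: "\<bar>wf h 0 - wf h (Suc 0)\<bar> \<le> 1"
    proof -
      have "0 \<le> wf h 1" by (simp add: wf_def)
      moreover have "wf h 1 \<le> 1" using wf_abs_le[OF h(1), of 1] by simp
      ultimately show ?thesis by (simp add: wf_def)
    qed
    have "(\<Sum>n<N. \<bar>wf h n - wf h (Suc n)\<bar>) = \<bar>wf h 0 - wf h (Suc 0)\<bar> + (\<Sum>n<M. \<bar>wf h (Suc n) - wf h (Suc (Suc n))\<bar>)"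
      unfolding Suc by (rule sum.lessThan_Suc_shift)
    also have "(\<Sum>n<M. \<bar>wf h (Suc n) - wf h (Suc (Suc n))\<bar>) \<le> (\<Sum>n<M. P (Suc n) - P (Suc (Suc n)))"
      by (rule sum_mono) (rule step)
    also have "(\<Sum>n<M. P (Suc n) - P (Suc (Suc n))) = P 1 - P (Suc M)"
      using sum_lessThan_telescope'[of "\<lambda>n. P (Suc n)" M] by simp
    finally show ?thesis using f0 P1 P0[of "Suc M"] by linarith
  qed
qed

lemma toeplitz_id:
  fixes a w :: "nat \<Rightarrow> real"
  assumes w0: "w 0 = 1"
  shows "(\<Sum>n<N. a n * w n) - s = (\<Sum>n<N. ((\<Sum>i<Suc n. a i) - s) * (w n - w (Suc n))) + ((\<Sum>i<N. a i) - s) * w N"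
proof (induction N)
  case 0 then show ?case using w0 by simp
next
  case (Suc N)
  then show ?case by (simp add: algebra_simps)
qed

lemma toeplitz:
  fixes a :: "nat \<Rightarrow> real" and w :: "nat \<Rightarrow> nat \<Rightarrow> real"
  assumes as: "a sums s"
    and w0: "\<And>k. w k 0 = 1"
    and wb: "\<And>k n. \<bar>w k n\<bar> \<le> 1"
    and w1: "\<And>n. (\<lambda>k. w k n) \<longlonglongrightarrow> 1"
    and V: "\<And>k N. (\<Sum>n<N. \<bar>w k n - w k (Suc n)\<bar>) \<le> V"
    and sm: "\<And>k. summable (\<lambda>n. a n * w k n)"
  shows "(\<lambda>k. \<Sum>n. a n * w k n) \<longlonglongrightarrow> s"
proof -
  define S where "S N = (\<Sum>i<N. a i)" for N
  have "S = (\<lambda>N. \<Sum>i<N. a i)" by (simp add: S_def fun_eq_iff)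
  then have S: "S \<longlonglongrightarrow> s" using as by (simp add: sums_def)
  have V0: "V \<ge> 0" using V[of 0 0] by simp
  show ?thesis unfolding LIMSEQ_iff
  proof (intro allI impI)
    fix r :: real assume r: "r > 0"
    define \<eta> where "\<eta> = r / (2 * (V + 1))"
    have e1: "\<eta> * (V + 1) = r / 2" using V0 by (simp add: \<eta>_def field_simps)
    have e2: "\<eta> > 0" unfolding \<eta>_def using r V0 by (intro divide_pos_pos) auto
    have \<eta>: "\<eta> > 0" "\<eta> * (V + 1) < r" using e1 e2 r by auto
    obtain N0 where N0': "\<forall>n\<ge>N0. norm (S n - s) < \<eta>"
      using S \<eta>(1) unfolding LIMSEQ_iff by blast
    have N0: "\<bar>S n - s\<bar> < \<eta>" if "n \<ge> N0" for n using N0' that by simp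
    define E where "E k = (\<Sum>n<N0. \<bar>S (Suc n) - s\<bar> * \<bar>w k n - w k (Suc n)\<bar>)" for k
    have E: "E \<longlonglongrightarrow> 0" unfolding E_def
    proof (rule tendsto_null_sum)
      fix n
      have "(\<lambda>k. w k n - w k (Suc n)) \<longlonglongrightarrow> 1 - 1" using tendsto_diff[OF w1 w1] .
      then have "(\<lambda>k. w k n - w k (Suc n)) \<longlonglongrightarrow> 0" by simp
      then have wz: "(\<lambda>k. \<bar>w k n - w k (Suc n)\<bar>) \<longlonglongrightarrow> 0" by (rule tendsto_rabs_zero)
      show "(\<lambda>k. \<bar>S (Suc n) - s\<bar> * \<bar>w k n - w k (Suc n)\<bar>) \<longlonglongrightarrow> 0"
        using tendsto_mult[OF tendsto_const[of "\<bar>S (Suc n) - s\<bar>"] wz] by simp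
    qed
    obtain k0 where k0': "\<forall>k\<ge>k0. norm (E k - 0) < \<eta>"
      using E \<eta>(1) unfolding LIMSEQ_iff by blast
    have k0: "\<bar>E k\<bar> < \<eta>" if "k \<ge> k0" for k using k0' that by simp
    have main: "\<bar>(\<Sum>n. a n * w k n) - s\<bar> \<le> E k + \<eta> * V" for k
    proof -
      define X where "X N = \<bar>(\<Sum>n<N. a n * w k n) - s\<bar> - \<bar>S N - s\<bar>" for N
      have "(\<lambda>N. (\<Sum>n<N. a n * w k n)) \<longlonglongrightarrow> (\<Sum>n. a n * w k n)"
        using sm[of k] by (simp add: summable_LIMSEQ)
      then have "X \<longlonglongrightarrow> \<bar>(\<Sum>n. a n * w k n) - s\<bar> - \<bar>s - s\<bar>" unfolding X_def
        by (intro tendsto_diff tendsto_rabs S tendsto_const)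
      then have XL: "X \<longlonglongrightarrow> \<bar>(\<Sum>n. a n * w k n) - s\<bar>" by simp
      have "X N \<le> E k + \<eta> * V" if N: "N \<ge> N0" for N
      proof -
        define c where "c n = (S (Suc n) - s) * (w k n - w k (Suc n))" for n
        have id: "(\<Sum>n<N. a n * w k n) - s = (\<Sum>n<N. c n) + (S N - s) * w k N"
          unfolding c_def S_def by (rule toeplitz_id) (rule w0)
        have "\<bar>(S N - s) * w k N\<bar> \<le> \<bar>S N - s\<bar>" using wb[of k N] by (simp add: abs_mult mult_left_le)
        moreover have "\<bar>\<Sum>n<N. c n\<bar> \<le> E k + \<eta> * V"
        proof -
          have "\<bar>\<Sum>n<N. c n\<bar> \<le> (\<Sum>n<N. \<bar>c n\<bar>)" by (rule sum_abs)
          also have "\<dots> \<le> (\<Sum>n<N. (if n < N0 then \<bar>S (Suc n) - s\<bar> * \<bar>w k n - w k (Suc n)\<bar> else 0) + \<eta> * \<bar>w k n - w k (Suc n)\<bar>)"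
          proof (rule sum_mono)
            fix n
            show "\<bar>c n\<bar> \<le> (if n < N0 then \<bar>S (Suc n) - s\<bar> * \<bar>w k n - w k (Suc n)\<bar> else 0) + \<eta> * \<bar>w k n - w k (Suc n)\<bar>"
            proof (cases "n < N0")
              case True then show ?thesis using \<eta>(1) by (simp add: c_def abs_mult)
            next
              case False
              then have "\<bar>S (Suc n) - s\<bar> \<le> \<eta>" using N0[of "Suc n"] by simp
              then show ?thesis using False by (simp add: c_def abs_mult mult_right_mono)
            qed
          qed
          also have "\<dots> = (\<Sum>n<N. (if n < N0 then \<bar>S (Suc n) - s\<bar> * \<bar>w k n - w k (Suc n)\<bar> else 0)) + \<eta> * (\<Sum>n<N. \<bar>w k n - w k (Suc n)\<bar>)"
            by (simp add: sum.distrib sum_distrib_left)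
          also have "(\<Sum>n<N. (if n < N0 then \<bar>S (Suc n) - s\<bar> * \<bar>w k n - w k (Suc n)\<bar> else 0)) = E k"
          proof -
            have "(\<Sum>n<N. (if n < N0 then \<bar>S (Suc n) - s\<bar> * \<bar>w k n - w k (Suc n)\<bar> else 0)) =
                  (\<Sum>n\<in>{..<N} \<inter> {n. n < N0}. \<bar>S (Suc n) - s\<bar> * \<bar>w k n - w k (Suc n)\<bar>)"
              by (simp add: sum.inter_restrict)
            also have "{..<N} \<inter> {n. n < N0} = {..<N0}" using N by auto
            finally show ?thesis by (simp add: E_def)
          qed
          also have "\<eta> * (\<Sum>n<N. \<bar>w k n - w k (Suc n)\<bar>) \<le> \<eta> * V" using V \<eta>(1) by (intro mult_left_mono) auto
          finally show ?thesis by simp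
        qed
        ultimately show ?thesis unfolding X_def id using abs_triangle_ineq[of "\<Sum>n<N. c n" "(S N - s) * w k N"] by linarith
      qed
      then show ?thesis by (intro LIMSEQ_le_const2[OF XL]) auto
    qed
    show "\<exists>no. \<forall>k\<ge>no. norm ((\<Sum>n. a n * w k n) - s) < r"
    proof (intro exI allI impI)
      fix k assume "k \<ge> k0"
      then have "E k < \<eta>" using k0[of k] by simp
      then have "\<bar>(\<Sum>n. a n * w k n) - s\<bar> < \<eta> * (V + 1)" using main[of k] by (simp add: algebra_simps)
      then show "norm ((\<Sum>n. a n * w k n) - s) < r" using \<eta>(2) by simp
    qed
  qed
qed

definition Fs :: "(nat \<Rightarrow> real) \<Rightarrow> real \<Rightarrow> real" where
  "Fs b y = (\<Sum>n. b n * sin (real n * y) / (real n)^2)"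

lemma Fs_summable:
  fixes b :: "nat \<Rightarrow> real"
  assumes B: "\<And>n. \<bar>b n\<bar> \<le> B"
  shows "summable (\<lambda>n. b n * sin (real n * y) / (real n)^2)"
proof (rule summable_comparison_test)
  show "summable (\<lambda>n. B * inverse (real n ^ 2))"
    by (intro summable_mult inverse_power_summable) auto
  show "\<exists>N. \<forall>n\<ge>N. norm (b n * sin (real n * y) / (real n)^2) \<le> B * inverse (real n ^ 2)"
  proof (intro exI allI impI)
    fix n :: nat
    have "\<bar>b n\<bar> * \<bar>sin (real n * y)\<bar> \<le> \<bar>b n\<bar>"
      by (rule mult_left_le) (auto simp: abs_sin_le_one)
    then have "\<bar>b n * sin (real n * y)\<bar> \<le> B" using B[of n] by (simp add: abs_mult)
    then have "\<bar>b n * sin (real n * y)\<bar> / (real n)^2 \<le> B / (real n)^2"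
      by (rule divide_right_mono) simp
    moreover have "norm (b n * sin (real n * y) / (real n)^2) = \<bar>b n * sin (real n * y)\<bar> / (real n)^2"
      by (simp add: abs_divide)
    ultimately show "norm (b n * sin (real n * y) / (real n)^2) \<le> B * inverse (real n ^ 2)"
      by (simp add: divide_inverse)
  qed
qed

lemma Fs_sums:
  fixes b :: "nat \<Rightarrow> real"
  assumes B: "\<And>n. \<bar>b n\<bar> \<le> B"
  shows "(\<lambda>n. b n * sin (real n * y) / (real n)^2) sums Fs b y"
  unfolding Fs_def using Fs_summable[OF B] by (rule summable_sums)

lemma trig_second_diff:
  fixes A B :: real
  shows "sin (A + B) + sin (A - B) - 2 * sin A = -4 * sin A * sin (B/2)^2"
proof -
  have "cos B = cos (2 * (B/2))" by simp
  also have "\<dots> = 1 - 2 * sin (B/2)^2" by (rule cos_double_sin)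
  finally have c: "cos B = 1 - 2 * sin (B/2)^2" .
  show ?thesis by (simp add: sin_add sin_diff c algebra_simps)
qed

lemma riemann_term:
  fixes b :: "nat \<Rightarrow> real" and h y :: real
  assumes h: "h > 0"
  shows "(b n * sin (real n * (y + 2*h)) / (real n)^2 + b n * sin (real n * (y - 2*h)) / (real n)^2
          - 2 * (b n * sin (real n * y) / (real n)^2)) / (2*h)^2
         = - (b n * sin (real n * y) * wf h n)"
proof (cases "n = 0")
  case True then show ?thesis by (simp add: wf_def)
next
  case False
  then have n0: "real n > 0" by simp
  have e1: "sin (real n * (y + 2*h)) = sin (real n * y + real n * (2*h))" by (simp add: distrib_left)
  have e2: "sin (real n * (y - 2*h)) = sin (real n * y - real n * (2*h))" by (simp add: right_diff_distrib)
  have e3: "real n * (2*h) / 2 = real n * h" by simp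
  have tr: "sin (real n * (y + 2*h)) + sin (real n * (y - 2*h)) - 2 * sin (real n * y)
        = -4 * sin (real n * y) * sin (real n * h)^2"
    unfolding e1 e2 trig_second_diff e3 ..
  have "(b n * sin (real n * (y + 2*h)) / (real n)^2 + b n * sin (real n * (y - 2*h)) / (real n)^2
          - 2 * (b n * sin (real n * y) / (real n)^2)) / (2*h)^2
        = b n * (sin (real n * (y + 2*h)) + sin (real n * (y - 2*h)) - 2 * sin (real n * y)) / ((real n)^2 * (2*h)^2)"
    using n0 h by (simp add: field_simps)
  also have "\<dots> = b n * (-4 * sin (real n * y) * sin (real n * h)^2) / ((real n)^2 * (2*h)^2)"
    unfolding tr ..
  also have "\<dots> = - (b n * sin (real n * y) * (sin (real n * h) / (real n * h))^2)"
    using n0 h by (simp add: field_simps power2_eq_square)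
  finally show ?thesis using False by (simp add: wf_def)
qed

lemma riemann_identity:
  fixes b :: "nat \<Rightarrow> real"
  assumes B: "\<And>n. \<bar>b n\<bar> \<le> B" and h: "h > 0"
  shows "(\<lambda>n. - (b n * sin (real n * y) * wf h n)) sums
           ((Fs b (y + 2*h) + Fs b (y - 2*h) - 2 * Fs b y) / (2*h)^2)"
proof -
  have "(\<lambda>n. (b n * sin (real n * (y + 2*h)) / (real n)^2 + b n * sin (real n * (y - 2*h)) / (real n)^2
          - 2 * (b n * sin (real n * y) / (real n)^2)) / (2*h)^2) sums
        ((Fs b (y + 2*h) + Fs b (y - 2*h) - 2 * Fs b y) / (2*h)^2)"
    by (intro sums_divide sums_diff sums_add sums_mult Fs_sums[OF B])
  then show ?thesis unfolding riemann_term[OF h] .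
qed

lemma wf_lim1: "(\<lambda>k. wf (1/(2*real (Suc k))) n) \<longlonglongrightarrow> 1"
proof (cases "n = 0")
  case True then show ?thesis by (simp add: wf_def)
next
  case False
  define u where "u k = real n * (1/(2*real (Suc k)))" for k
  have u0: "u k > 0" for k using False by (simp add: u_def)
  have "(\<lambda>k. real n / 2 * inverse (real (Suc k))) \<longlonglongrightarrow> real n / 2 * 0"
    by (intro tendsto_mult tendsto_const LIMSEQ_inverse_real_of_nat)
  moreover have "real n / 2 * inverse (real (Suc k)) = u k" for k by (simp add: u_def field_simps)
  ultimately have u: "u \<longlonglongrightarrow> 0" by simp
  have "(\<lambda>k. (u k)^2 / 6) \<longlonglongrightarrow> 0^2 / 6" by (intro tendsto_divide tendsto_power u tendsto_const) auto
  then have u2: "(\<lambda>k. (u k)^2 / 6) \<longlonglongrightarrow> 0" by simp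
  have "(\<lambda>k. sin (u k) / u k - 1) \<longlonglongrightarrow> 0"
    by (rule Lim_null_comparison[OF _ u2]) (use sinc_near_1 u0 in auto)
  then have "(\<lambda>k. (sin (u k) / u k - 1) + 1) \<longlonglongrightarrow> 0 + 1" by (intro tendsto_add tendsto_const)
  then have "(\<lambda>k. sin (u k) / u k) \<longlonglongrightarrow> 1" by simp
  then have "(\<lambda>k. (sin (u k) / u k)^2) \<longlonglongrightarrow> 1^2" by (intro tendsto_power)
  then show ?thesis using False by (simp add: wf_def u_def)
qed

lemma riemann:
  fixes b :: "nat \<Rightarrow> real"
  assumes B: "\<And>n. \<bar>b n\<bar> \<le> B" and as: "(\<lambda>n. b n * sin (real n * y)) sums s"
  shows "(\<lambda>k. (Fs b (y + 1/real (Suc k)) + Fs b (y - 1/real (Suc k)) - 2 * Fs b y) / (1/real (Suc k))^2) \<longlonglongrightarrow> -s"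
proof -
  define h where "h k = 1/(2*real (Suc k))" for k
  have h0: "h k > 0" "h k \<le> 1" for k by (auto simp: h_def)
  have h2: "2 * h k = 1/real (Suc k)" for k by (simp add: h_def field_simps)
  have ri: "(\<lambda>n. - (b n * sin (real n * y) * wf (h k) n)) sums
           ((Fs b (y + 1/real (Suc k)) + Fs b (y - 1/real (Suc k)) - 2 * Fs b y) / (1/real (Suc k))^2)" for k
    using riemann_identity[OF B h0(1)[of k], where y=y] unfolding h2 .
  have sm: "summable (\<lambda>n. b n * sin (real n * y) * wf (h k) n)" for k
    using sums_summable[OF ri[of k]] summable_minus_iff by blast
  have eq: "(Fs b (y + 1/real (Suc k)) + Fs b (y - 1/real (Suc k)) - 2 * Fs b y) / (1/real (Suc k))^2
        = - (\<Sum>n. b n * sin (real n * y) * wf (h k) n)" for k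
    using sums_unique[OF ri[of k]] suminf_minus[OF sm[of k]] by simp
  have T: "(\<lambda>k. \<Sum>n. b n * sin (real n * y) * wf (h k) n) \<longlonglongrightarrow> s"
  proof (rule toeplitz[OF as, where V=17])
    show "\<And>k. wf (h k) 0 = 1" by (simp add: wf_def)
    show "\<And>k n. \<bar>wf (h k) n\<bar> \<le> 1" by (rule wf_abs_le[OF h0(1)])
    show "\<And>n. (\<lambda>k. wf (h k) n) \<longlonglongrightarrow> 1" unfolding h_def by (rule wf_lim1)
    show "\<And>k N. (\<Sum>n<N. \<bar>wf (h k) n - wf (h k) (Suc n)\<bar>) \<le> 17" by (rule w_var[OF h0])
    show "\<And>k. summable (\<lambda>n. b n * sin (real n * y) * wf (h k) n)" by (rule sm)
  qed
  show ?thesis unfolding eq by (intro tendsto_minus T)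
qed

lemma Fs_term_bound:
  fixes b :: "nat \<Rightarrow> real"
  assumes B: "\<And>n. \<bar>b n\<bar> \<le> B"
  shows "norm (b n * sin (real n * y) / (real n)^2) \<le> B * inverse (real n ^ 2)"
proof -
  have "\<bar>b n\<bar> * \<bar>sin (real n * y)\<bar> \<le> \<bar>b n\<bar>"
    by (rule mult_left_le) (auto simp: abs_sin_le_one)
  then have "\<bar>b n * sin (real n * y)\<bar> \<le> B" using B[of n] by (simp add: abs_mult)
  then have "\<bar>b n * sin (real n * y)\<bar> / (real n)^2 \<le> B / (real n)^2"
    by (rule divide_right_mono) simp
  moreover have "norm (b n * sin (real n * y) / (real n)^2) = \<bar>b n * sin (real n * y)\<bar> / (real n)^2"
    by (simp add: abs_divide)
  ultimately show ?thesis by (simp add: divide_inverse)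
qed

lemma Fs_cont:
  fixes b :: "nat \<Rightarrow> real"
  assumes B: "\<And>n. \<bar>b n\<bar> \<le> B"
  shows "continuous_on UNIV (Fs b)"
proof -
  have ul: "uniform_limit UNIV (\<lambda>n x. \<Sum>i<n. b i * sin (real i * x) / (real i)^2)
              (\<lambda>x. \<Sum>i. b i * sin (real i * x) / (real i)^2) sequentially"
  proof (rule Weierstrass_m_test[where M="\<lambda>n. B * inverse (real n ^ 2)"])
    show "\<And>n x. x \<in> UNIV \<Longrightarrow> norm (b n * sin (real n * x) / (real n)^2) \<le> B * inverse (real n ^ 2)"
      using Fs_term_bound[of b B, OF B] by simp
    show "summable (\<lambda>n. B * inverse (real n ^ 2))"
      by (rule summable_mult, rule inverse_power_summable) simp
  qed
  have cf: "continuous_on UNIV (\<lambda>x. \<Sum>i. b i * sin (real i * x) / (real i)^2)"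
  proof (rule uniform_limit_theorem[OF _ ul])
    have "continuous_on UNIV (\<lambda>x. \<Sum>i<n. (b i / (real i)^2) * sin (real i * x))" for n
      by (intro continuous_intros)
    moreover have "(\<lambda>x. \<Sum>i<n. (b i / (real i)^2) * sin (real i * x)) = (\<lambda>x. \<Sum>i<n. b i * sin (real i * x) / (real i)^2)" for n
      by (simp add: fun_eq_iff)
    ultimately show "\<forall>\<^sub>F n in sequentially. continuous_on UNIV (\<lambda>x. \<Sum>i<n. b i * sin (real i * x) / (real i)^2)"
      by (intro always_eventually) auto
  qed simp
  have eqF: "Fs b = (\<lambda>x. \<Sum>i. b i * sin (real i * x) / (real i)^2)" by (simp add: Fs_def fun_eq_iff)
  show ?thesis unfolding eqF by (rule cf)
qed

lemma schwarz_chord: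
  fixes A :: "real \<Rightarrow> real" and t :: "nat \<Rightarrow> real"
  assumes cont: "continuous_on {a..b} A"
    and t0: "\<And>k. t k > 0" and tl: "t \<longlonglongrightarrow> 0"
    and D: "\<And>y \<eta>. a < y \<Longrightarrow> y < b \<Longrightarrow> \<eta> > 0 \<Longrightarrow>
              eventually (\<lambda>k. (A (y + t k) + A (y - t k) - 2 * A y) / (t k)^2 > -\<eta>) sequentially"
    and uvw: "a \<le> u" "u < v" "v < w" "w \<le> b"
  shows "A v \<le> A u + (A w - A u) * (v - u) / (w - u)"
proof (rule ccontr)
  define c where "c = (A w - A u) / (w - u)"
  assume "\<not> A v \<le> A u + (A w - A u) * (v - u) / (w - u)"
  then have \<delta>: "A v - (A u + c * (v - u)) > 0" by (simp add: c_def)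
  define \<delta> where "\<delta> = A v - (A u + c * (v - u))"
  define \<eta> where "\<eta> = \<delta> / ((v - u) * (w - v)) / 2"
  have \<eta>0: "\<eta> > 0" using \<delta> uvw by (simp add: \<eta>_def \<delta>_def)
  define g where "g x = A x - (A u + c * (x - u)) + \<eta> * (x - u) * (x - w)" for x
  have cw: "c * (w - u) = A w - A u" using uvw by (simp add: c_def)
  have gu: "g u = 0" by (simp add: g_def)
  have gw: "g w = 0" using cw by (simp add: g_def)
  have gv: "g v = \<delta> / 2"
  proof -
    have P: "(v - u) * (w - v) > 0" using uvw by simp
    have "\<eta> * (v - u) * (v - w) = - (\<eta> * ((v - u) * (w - v)))" by (simp add: algebra_simps)
    also have "\<eta> * ((v - u) * (w - v)) = \<delta> / 2"
    proof -
      have gen: "\<And>Q::real. Q > 0 \<Longrightarrow> \<delta> / Q / 2 * Q = \<delta> / 2" by (simp add: field_simps)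
      show ?thesis unfolding \<eta>_def by (rule gen[OF P])
    qed
    finally have "\<eta> * (v - u) * (v - w) = - (\<delta> / 2)" .
    then show ?thesis unfolding g_def \<delta>_def by (simp add: field_simps)
  qed
  have contg: "continuous_on {u..w} g"
  proof -
    have "continuous_on {u..w} A" by (rule continuous_on_subset[OF cont]) (use uvw in auto)
    then show ?thesis unfolding g_def by (intro continuous_intros)
  qed
  obtain y0 where y0: "y0 \<in> {u..w}" and ymax: "\<And>x. x \<in> {u..w} \<Longrightarrow> g x \<le> g y0"
    using continuous_attains_sup[OF compact_Icc _ contg] uvw by auto
  have gy0: "g y0 > 0" using ymax[of v] gv \<delta> uvw \<delta>_def by simp
  have y0i: "u < y0" "y0 < w" using y0 gy0 gu gw by (auto simp: less_le)
  define r where "r = min (y0 - u) (w - y0)"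
  have r0: "r > 0" using y0i by (simp add: r_def)
  have ev: "eventually (\<lambda>k. t k < r \<and> (A (y0 + t k) + A (y0 - t k) - 2 * A y0) / (t k)^2 > -\<eta>) sequentially"
  proof (rule eventually_conj)
    show "eventually (\<lambda>k. t k < r) sequentially"
      by (rule order_tendstoD(2)[OF tl r0])
    show "eventually (\<lambda>k. (A (y0 + t k) + A (y0 - t k) - 2 * A y0) / (t k)^2 > -\<eta>) sequentially"
      by (rule D) (use y0i uvw \<eta>0 in auto)
  qed
  then obtain N where "\<forall>n\<ge>N. t n < r \<and> (A (y0 + t n) + A (y0 - t n) - 2 * A y0) / (t n)^2 > -\<eta>"
    unfolding eventually_sequentially by blast
  then have k: "t N < r" "(A (y0 + t N) + A (y0 - t N) - 2 * A y0) / (t N)^2 > -\<eta>" by auto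
  define k where "k = N"
  note k = k[folded k_def]
  define s where "s = t k"
  have s0: "s > 0" using t0 by (simp add: s_def)
  have "y0 + s \<in> {u..w}" "y0 - s \<in> {u..w}" using k(1) y0i s0 by (auto simp: s_def r_def)
  then have "g (y0 + s) \<le> g y0" "g (y0 - s) \<le> g y0" using ymax by auto
  moreover have "A (y0 + s) + A (y0 - s) - 2 * A y0 = (g (y0 + s) + g (y0 - s) - 2 * g y0) - 2 * \<eta> * s^2"
    by (simp add: g_def power2_eq_square algebra_simps)
  ultimately have "A (y0 + s) + A (y0 - s) - 2 * A y0 \<le> - 2 * \<eta> * s^2" by linarith
  then have "(A (y0 + s) + A (y0 - s) - 2 * A y0) / s^2 \<le> - 2 * \<eta>" using s0
    by (simp add: divide_le_eq)
  then show False using k(2) \<eta>0 by (simp add: s_def)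
qed

lemma slopes:
  fixes A :: "real \<Rightarrow> real"
  assumes chord: "A v \<le> A u + (A w - A u) * (v - u) / (w - u)"
    and uvw: "u < v" "v < w"
  shows "(A v - A u) / (v - u) \<le> (A w - A u) / (w - u)"
    and "(A w - A u) / (w - u) \<le> (A w - A v) / (w - v)"
proof -
  define c where "c = (A w - A u) / (w - u)"
  have ch: "A v - A u \<le> c * (v - u)" using chord by (simp add: c_def)
  have cw: "c * (w - u) = A w - A u" using uvw by (simp add: c_def)
  have cd: "c * (w - v) = c * (w - u) - c * (v - u)" by (simp add: algebra_simps)
  show "(A v - A u) / (v - u) \<le> (A w - A u) / (w - u)"
    unfolding c_def[symmetric] using ch uvw by (simp add: pos_divide_le_eq)
  show "(A w - A u) / (w - u) \<le> (A w - A v) / (w - v)"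
    unfolding c_def[symmetric] using ch cw cd uvw by (simp add: pos_le_divide_eq)
qed

lemma series_C:
  fixes b :: "nat \<Rightarrow> real"
  assumes B: "\<And>n. \<bar>b n\<bar> \<le> B"
  shows "(\<lambda>n. 2 * b n * sin (real n * h) * (1 - cos (real n * x)) / (real n)^2) sums
          ((Fs b h - Fs b (-h)) - (Fs b (x+h) - Fs b (x-h)))"
proof -
  have s: "(\<lambda>n. (b n * sin (real n * h) / (real n)^2 - b n * sin (real n * (-h)) / (real n)^2)
           - (b n * sin (real n * (x+h)) / (real n)^2 - b n * sin (real n * (x-h)) / (real n)^2)) sums
          ((Fs b h - Fs b (-h)) - (Fs b (x+h) - Fs b (x-h)))"
    by (intro sums_diff Fs_sums[OF B])
  have "(b n * sin (real n * h) / (real n)^2 - b n * sin (real n * (-h)) / (real n)^2)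
           - (b n * sin (real n * (x+h)) / (real n)^2 - b n * sin (real n * (x-h)) / (real n)^2)
        = 2 * b n * sin (real n * h) * (1 - cos (real n * x)) / (real n)^2" for n
  proof -
    have e1: "sin (real n * (x+h)) = sin (real n * x + real n * h)" by (simp add: distrib_left)
    have e2: "sin (real n * (x-h)) = sin (real n * x - real n * h)" by (simp add: right_diff_distrib)
    have e3: "sin (real n * (-h)) = - sin (real n * h)" by simp
    have tr: "sin (real n * h) - sin (real n * (-h)) - (sin (real n * (x+h)) - sin (real n * (x-h)))
            = 2 * sin (real n * h) * (1 - cos (real n * x))"
      unfolding e1 e2 e3 by (simp add: sin_add sin_diff algebra_simps)
    have "(b n * sin (real n * h) / (real n)^2 - b n * sin (real n * (-h)) / (real n)^2)
           - (b n * sin (real n * (x+h)) / (real n)^2 - b n * sin (real n * (x-h)) / (real n)^2)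
         = b n * (sin (real n * h) - sin (real n * (-h)) - (sin (real n * (x+h)) - sin (real n * (x-h)))) / (real n)^2"
      by (simp add: diff_divide_distrib right_diff_distrib)
    also have "\<dots> = 2 * b n * sin (real n * h) * (1 - cos (real n * x)) / (real n)^2"
      unfolding tr by (simp add: algebra_simps)
    finally show ?thesis .
  qed
  then show ?thesis using s by simp
qed

lemma sin_ge_half:
  fixes u :: real
  assumes "0 \<le> u" "u \<le> 1" shows "sin u \<ge> u / 2"
proof -
  have "\<bar>sin u - u\<bar> \<le> \<bar>u\<bar>^3 / 6" by (rule sin_minus_x_bound)
  moreover have "\<bar>u\<bar>^3 \<le> u"
  proof -
    have "u * u \<le> 1" using assms by (intro mult_le_one) auto
    then have "u * u * u \<le> 1 * u" using assms by (intro mult_right_mono) auto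
    then show ?thesis using assms by (simp add: power3_eq_cube)
  qed
  ultimately show ?thesis using assms by linarith
qed

lemma cos_nonpos_half:
  fixes a :: real
  assumes "pi/2 \<le> a" "a \<le> pi" shows "cos a \<le> 0"
proof -
  have "cos (pi - a) \<ge> 0" by (rule cos_ge_zero) (use assms in auto)
  moreover have "cos (pi - a) = - cos a" by (simp add: cos_diff)
  ultimately show ?thesis by simp
qed

lemma c_abs_bound:
  fixes b :: "nat \<Rightarrow> real"
  shows "\<bar>2 * b n * sin (real n * h) * (1 - cos (real n * x)) / (real n)^2\<bar> \<le> 4 * \<bar>b n\<bar> / (real n)^2"
proof -
  have "\<bar>sin (real n * h)\<bar> \<le> 1" by (rule abs_sin_le_one)
  moreover have "\<bar>1 - cos (real n * x)\<bar> \<le> 2" using abs_cos_le_one[of "real n * x"] by linarith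
  ultimately have "\<bar>sin (real n * h)\<bar> * \<bar>1 - cos (real n * x)\<bar> \<le> 1 * 2"
    by (intro mult_mono) auto
  then have "\<bar>b n\<bar> * (\<bar>sin (real n * h)\<bar> * \<bar>1 - cos (real n * x)\<bar>) \<le> \<bar>b n\<bar> * 2"
    by (intro mult_left_mono) auto
  then have "\<bar>2 * b n * sin (real n * h) * (1 - cos (real n * x))\<bar> \<le> 4 * \<bar>b n\<bar>"
    by (simp add: abs_mult)
  then have "\<bar>2 * b n * sin (real n * h) * (1 - cos (real n * x))\<bar> / (real n)^2 \<le> 4 * \<bar>b n\<bar> / (real n)^2"
    by (rule divide_right_mono) simp
  then show ?thesis by (simp add: abs_divide)
qed

lemma inv_sq_tele:
  fixes a :: real assumes "a \<ge> 1"
  shows "1 / (a+1)^2 \<le> 1/a - 1/(a+1)"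
proof -
  have "1 / (a+1)^2 \<le> 1 / (a * (a+1))"
    using assms by (intro divide_left_mono) (auto simp: power2_eq_square intro!: mult_right_mono mult_pos_pos)
  also have "\<dots> = 1/a - 1/(a+1)" using assms by (simp add: field_simps)
  finally show ?thesis .
qed

lemma lower_pos:
  fixes b :: "nat \<Rightarrow> real"
  assumes nonneg: "\<And>n. n \<ge> 1 \<Longrightarrow> b n \<ge> 0"
    and B: "\<And>n. \<bar>b n\<bar> \<le> B"
    and h: "0 < h" "h \<le> 1" and m: "m \<ge> 1" "2 * real m * h \<le> 1"
    and x: "x = pi / (2 * real m)"
    and tail: "\<And>n. n > nat \<lfloor>pi / h\<rfloor> \<Longrightarrow> \<bar>b n\<bar> \<le> \<beta>"
  shows "h / (2 * real m) * (\<Sum>n=m..2*m. b n)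
          \<le> (\<Sum>n. 2 * b n * sin (real n * h) * (1 - cos (real n * x)) / (real n)^2) + 4 * \<beta> * h"
proof -
  define c where "c n = 2 * b n * sin (real n * h) * (1 - cos (real n * x)) / (real n)^2" for n
  define N where "N = nat \<lfloor>pi / h\<rfloor>"
  have \<beta>0: "\<beta> \<ge> 0" using tail[of "Suc N"] by (simp add: N_def)
  have pih: "pi / h - 1 \<ge> 1 / h"
  proof -
    have "1 \<le> 1 / h" using h by simp
    moreover have "1 / h \<le> (pi - 1) / h" using h pi_gt3 by (intro divide_right_mono) auto
    moreover have "(pi - 1) / h = pi / h - 1 / h" by (simp add: diff_divide_distrib)
    ultimately show ?thesis by linarith
  qed
  have fl: "real_of_int \<lfloor>pi / h\<rfloor> > pi / h - 1" by linarith
  have fl0: "\<lfloor>pi / h\<rfloor> \<ge> 0" using h by simp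
  have NR: "real N = real_of_int \<lfloor>pi / h\<rfloor>" using fl0 by (simp add: N_def)
  have N1: "real N \<ge> 1 / h" using NR fl pih by linarith
  have N3: "real N \<le> pi / h" using NR by simp
  have N2: "2 * m \<le> N"
  proof -
    have "real (2 * m) \<le> 1 / h" using m h by (simp add: field_simps)
    then have "real (2 * m) \<le> real N" using N1 by linarith
    then show ?thesis by linarith
  qed
  have Npos: "real N > 0" using N2 m by simp
  have c0: "c i \<ge> 0" if "i \<le> N" for i
  proof (cases "i = 0")
    case True then show ?thesis by (simp add: c_def)
  next
    case False
    have "real i * h \<le> real N * h" using that h by (intro mult_right_mono) auto
    also have "\<dots> \<le> pi" using N3 h by (simp add: field_simps)
    finally have ih: "real i * h \<le> pi" .
    have "sin (real i * h) \<ge> 0" by (rule sin_ge_zero) (use ih h in auto)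
    moreover have "1 - cos (real i * x) \<ge> 0" using cos_le_one[of "real i * x"] by linarith
    moreover have "b i \<ge> 0" using nonneg False by simp
    ultimately show ?thesis by (simp add: c_def)
  qed
  have cblock: "c i \<ge> h / (2 * real m) * b i" if "m \<le> i" "i \<le> 2*m" for i
  proof -
    have i0: "real i > 0" using that m by simp
    have bi: "b i \<ge> 0" using nonneg that m by simp
    have "real i * h \<le> 2 * real m * h" using that h by (intro mult_right_mono) auto
    then have ih1: "real i * h \<le> 1" using m by linarith
    have si: "sin (real i * h) \<ge> real i * h / 2" by (rule sin_ge_half) (use ih1 i0 h in auto)
    have ix1: "real i * x \<ge> pi / 2"
    proof -
      have e: "real i * x = pi * (real i / (2 * real m))" by (simp add: x)
      have "real i / (2 * real m) \<ge> 1/2" using that m by (simp add: field_simps)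
      then have "pi * (1/2) \<le> pi * (real i / (2 * real m))" by (intro mult_left_mono) auto
      then show ?thesis using e by simp
    qed
    have ix2: "real i * x \<le> pi"
    proof -
      have e: "real i * x = pi * (real i / (2 * real m))" by (simp add: x)
      have "real i / (2 * real m) \<le> 1" using that m by (simp add: field_simps)
      then have "pi * (real i / (2 * real m)) \<le> pi * 1" by (intro mult_left_mono) auto
      then show ?thesis using e by simp
    qed
    have co: "1 - cos (real i * x) \<ge> 1" using cos_nonpos_half[OF ix1 ix2] by simp
    have "2 * b i * (real i * h / 2) * 1 \<le> 2 * b i * sin (real i * h) * (1 - cos (real i * x))"
    proof -
      have ih0: "real i * h \<ge> 0" using i0 h by simp
      then have s0: "sin (real i * h) \<ge> 0" using si by linarith
      show ?thesis using bi si co ih0 s0 by (intro mult_mono mult_left_mono) auto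
    qed
    then have "2 * b i * (real i * h / 2) * 1 / (real i)^2 \<le> c i"
      unfolding c_def by (rule divide_right_mono) simp
    moreover have "2 * b i * (real i * h / 2) * 1 / (real i)^2 = b i * h / real i"
      using i0 by (simp add: power2_eq_square field_simps)
    moreover have "b i * h / real i \<ge> b i * h / (2 * real m)"
      using bi h that i0 by (intro divide_left_mono) auto
    ultimately show ?thesis by (simp add: mult.commute)
  qed
  have csum: "summable c"
  proof (rule summable_comparison_test)
    show "summable (\<lambda>n. 4 * B * inverse (real n ^ 2))"
      by (rule summable_mult, rule inverse_power_summable) simp
    show "\<exists>N. \<forall>n\<ge>N. norm (c n) \<le> 4 * B * inverse (real n ^ 2)"
    proof (intro exI allI impI)
      fix n :: nat
      have "norm (c n) \<le> 4 * \<bar>b n\<bar> / (real n)^2" unfolding c_def using c_abs_bound by simp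
      also have "\<dots> \<le> 4 * B / (real n)^2" using B[of n] by (intro divide_right_mono) auto
      finally show "norm (c n) \<le> 4 * B * inverse (real n ^ 2)" by (simp add: divide_inverse)
    qed
  qed
  have split: "suminf c = (\<Sum>j. c (j + Suc N)) + (\<Sum>i<Suc N. c i)"
    by (rule suminf_split_initial_segment[OF csum])
  have head: "(\<Sum>i<Suc N. c i) \<ge> h / (2 * real m) * (\<Sum>n=m..2*m. b n)"
  proof -
    have "h / (2 * real m) * (\<Sum>n=m..2*m. b n) = (\<Sum>n=m..2*m. h / (2 * real m) * b n)"
      by (simp add: sum_distrib_left)
    also have "\<dots> \<le> (\<Sum>n=m..2*m. c n)" by (rule sum_mono) (use cblock in auto)
    also have "\<dots> \<le> (\<Sum>i<Suc N. c i)"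
      by (rule sum_mono2) (use N2 c0 in auto)
    finally show ?thesis .
  qed
  have tailb: "(\<Sum>j. c (j + Suc N)) \<ge> - (4 * \<beta> / real N)"
  proof -
    define g where "g j = 4 * \<beta> / real (j + N)" for j
    have glim: "g \<longlonglongrightarrow> 0"
    proof -
      have "(\<lambda>n. inverse (real (Suc (n + (N - 1))))) \<longlonglongrightarrow> 0"
        using LIMSEQ_ignore_initial_segment[OF LIMSEQ_inverse_real_of_nat, of "N - 1"] by simp
      moreover have "Suc (n + (N - 1)) = n + N" for n using N2 m by simp
      ultimately have "(\<lambda>n. inverse (real (n + N))) \<longlonglongrightarrow> 0" by simp
      then have "(\<lambda>n. 4 * \<beta> * inverse (real (n + N))) \<longlonglongrightarrow> 4 * \<beta> * 0" by (intro tendsto_mult tendsto_const)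
      moreover have "g = (\<lambda>n. 4 * \<beta> * inverse (real (n + N)))" by (simp add: g_def fun_eq_iff divide_inverse)
      ultimately show ?thesis by simp
    qed
    have tel: "(\<lambda>j. g j - g (Suc j)) sums (g 0 - 0)" by (rule telescope_sums'[OF glim])
    have tel1: "(\<lambda>j. - (g j - g (Suc j))) sums (- (g 0 - 0))" by (rule sums_minus[OF tel])
    have g0: "g 0 = 4 * \<beta> / real N" by (simp add: g_def)
    have tel2: "(\<lambda>j. - (g j - g (Suc j))) sums (- (4 * \<beta> / real N))" using tel1 unfolding g0 by simp
    have le: "- (g j - g (Suc j)) \<le> c (j + Suc N)" for j
    proof -
      define a where "a = real (j + N)"
      have a1: "a \<ge> 1" using N2 m by (simp add: a_def)
      have na: "real (j + Suc N) = a + 1" by (simp add: a_def)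
      have "\<bar>c (j + Suc N)\<bar> \<le> 4 * \<bar>b (j + Suc N)\<bar> / (real (j + Suc N))^2" unfolding c_def by (rule c_abs_bound)
      also have "\<dots> \<le> 4 * \<beta> / (real (j + Suc N))^2" using tail[of "j + Suc N"] by (intro divide_right_mono) (auto simp: N_def)
      also have "\<dots> = 4 * \<beta> * (1 / (a+1)^2)" unfolding na by simp
      also have "\<dots> \<le> 4 * \<beta> * (1/a - 1/(a+1))" using inv_sq_tele[OF a1] \<beta>0 by (intro mult_left_mono) auto
      also have "\<dots> = g j - g (Suc j)" by (simp add: g_def a_def field_simps)
      finally show ?thesis by linarith
    qed
    have "(\<Sum>j. - (g j - g (Suc j))) \<le> (\<Sum>j. c (j + Suc N))"
      by (rule suminf_le[OF le sums_summable[OF tel2] summable_ignore_initial_segment[OF csum]])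
    then show ?thesis using sums_unique[OF tel2] by simp
  qed
  have "4 * \<beta> / real N \<le> 4 * \<beta> * h"
  proof -
    have "1 / real N \<le> h" using N1 h Npos by (simp add: field_simps)
    then have "4 * \<beta> * (1 / real N) \<le> 4 * \<beta> * h" using \<beta>0 by (intro mult_left_mono) auto
    then show ?thesis by simp
  qed
  then show ?thesis using split head tailb unfolding c_def[symmetric] by linarith
qed

lemma Q_ineq:
  fixes b :: "nat \<Rightarrow> real" and f :: "real \<Rightarrow> real"
  assumes B: "\<And>n. \<bar>b n\<bar> \<le> B"
    and fs: "\<And>y. (\<lambda>n. b n * sin (real n * y)) sums f y"
    and d: "d > 0" and fe: "\<And>y. -d < y \<Longrightarrow> y < d \<Longrightarrow> \<bar>f y\<bar> \<le> \<epsilon>"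
    and hx: "0 < h" "2*h < x" "x + h \<le> d"
  shows "(Fs b h - Fs b (-h)) - (Fs b (x+h) - Fs b (x-h)) \<le> 2 * h * \<epsilon> * x"
proof -
  define A where "A y = Fs b y + \<epsilon> * y^2 / 2" for y
  define t where "t k = 1 / real (Suc k)" for k
  have chord: "A v \<le> A u + (A w - A u) * (v - u) / (w - u)"
    if "-d \<le> u" "u < v" "v < w" "w \<le> d" for u v w
  proof (rule schwarz_chord[where t = t])
    have "continuous_on UNIV (Fs b)" by (rule Fs_cont[OF B])
    then have "continuous_on {-d..d} (Fs b)" by (rule continuous_on_subset) auto
    then show "continuous_on {-d..d} A" unfolding A_def by (intro continuous_intros) auto
    show "\<And>k. 0 < t k" by (simp add: t_def)
    have "(\<lambda>k. inverse (real (Suc k))) \<longlonglongrightarrow> 0" by (rule LIMSEQ_inverse_real_of_nat)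
    then show "t \<longlonglongrightarrow> 0" by (simp add: t_def[abs_def] divide_inverse)
    show "\<forall>\<^sub>F k in sequentially. - \<eta> < (A (y + t k) + A (y - t k) - 2 * A y) / (t k)^2"
      if "-d < y" "y < d" "0 < \<eta>" for y \<eta>
    proof -
      have R: "(\<lambda>k. (Fs b (y + 1/real (Suc k)) + Fs b (y - 1/real (Suc k)) - 2 * Fs b y) / (1/real (Suc k))^2) \<longlonglongrightarrow> - f y"
        by (rule riemann[OF B fs])
      have eq: "(A (y + t k) + A (y - t k) - 2 * A y) / (t k)^2
          = (Fs b (y + 1/real (Suc k)) + Fs b (y - 1/real (Suc k)) - 2 * Fs b y) / (1/real (Suc k))^2 + \<epsilon>" for k
      proof -
        have tk: "t k > 0" by (simp add: t_def)
        have "A (y + t k) + A (y - t k) - 2 * A y = (Fs b (y + t k) + Fs b (y - t k) - 2 * Fs b y) + \<epsilon> * (t k)^2"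
          by (simp add: A_def power2_eq_square field_simps)
        then have "(A (y + t k) + A (y - t k) - 2 * A y) / (t k)^2 = (Fs b (y + t k) + Fs b (y - t k) - 2 * Fs b y) / (t k)^2 + \<epsilon>"
          using tk by (simp add: add_divide_distrib)
        then show ?thesis by (simp add: t_def)
      qed
      have "(\<lambda>k. (A (y + t k) + A (y - t k) - 2 * A y) / (t k)^2) \<longlonglongrightarrow> - f y + \<epsilon>"
        unfolding eq by (intro tendsto_add R tendsto_const)
      moreover have "- \<eta> < - f y + \<epsilon>" using fe[OF that(1,2)] that(3) by linarith
      ultimately show ?thesis by (rule order_tendstoD(1))
    qed
  qed (use that in auto)
  have x0: "x > 0" using hx by simp
  have c1: "A h \<le> A (-h) + (A (x+h) - A (-h)) * (h - -h) / ((x+h) - -h)"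
    by (rule chord) (use hx x0 in auto)
  have c2: "A (x-h) \<le> A h + (A (x+h) - A h) * ((x-h) - h) / ((x+h) - h)"
    by (rule chord) (use hx x0 in auto)
  have s1: "(A h - A (-h)) / (h - -h) \<le> (A (x+h) - A (-h)) / ((x+h) - -h)"
    by (rule slopes(1)[OF c1]) (use hx x0 in auto)
  have s2: "(A (x+h) - A (-h)) / ((x+h) - -h) \<le> (A (x+h) - A h) / ((x+h) - h)"
    by (rule slopes(2)[OF c1]) (use hx x0 in auto)
  have s3: "(A (x+h) - A h) / ((x+h) - h) \<le> (A (x+h) - A (x-h)) / ((x+h) - (x-h))"
    by (rule slopes(2)[OF c2]) (use hx x0 in auto)
  have "(A h - A (-h)) / (2*h) \<le> (A (x+h) - A (x-h)) / (2*h)" using s1 s2 s3 by simp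
  then have "A h - A (-h) \<le> A (x+h) - A (x-h)" using hx by (simp add: divide_right_mono_neg divide_le_cancel)
  moreover have "A h - A (-h) = Fs b h - Fs b (-h)" by (simp add: A_def)
  moreover have "A (x+h) - A (x-h) = Fs b (x+h) - Fs b (x-h) + 2 * h * \<epsilon> * x"
    by (simp add: A_def power2_eq_square field_simps)
  ultimately show ?thesis by linarith
qed

lemma block_small:
  fixes b :: "nat \<Rightarrow> real" and f :: "real \<Rightarrow> real"
  assumes nonneg: "\<And>n. n \<ge> 1 \<Longrightarrow> b n \<ge> 0"
    and bl: "b \<longlonglongrightarrow> 0"
    and fs: "\<And>y. (\<lambda>n. b n * sin (real n * y)) sums f y"
    and fc: "isCont f 0" and f0: "f 0 = 0"
    and \<epsilon>: "\<epsilon> > 0"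
  shows "\<exists>M. \<forall>m\<ge>M. (\<Sum>n=m..2*m. b n) \<le> (2*pi+8) * \<epsilon>"
proof -
  obtain B where B: "\<And>n. \<bar>b n\<bar> \<le> B"
    using convergent_imp_Bseq[of b] bl unfolding convergent_def Bseq_def by auto
  obtain d where d: "d > 0" and dd: "\<And>y. y \<noteq> 0 \<Longrightarrow> norm (y - 0) < d \<Longrightarrow> norm (f y - f 0) < \<epsilon>"
    using fc \<epsilon> unfolding isCont_def LIM_eq by blast
  have fe: "\<bar>f y\<bar> \<le> \<epsilon>" if "-d < y" "y < d" for y
  proof (cases "y = 0")
    case True then show ?thesis using f0 \<epsilon> by simp
  next
    case False
    have "\<bar>y\<bar> < d" using that by linarith
    then have "norm (f y - f 0) < \<epsilon>" using dd[of y] False by simp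
    then show ?thesis using f0 by simp
  qed
  define M where "M = nat \<lceil>pi / d\<rceil> + 1"
  show ?thesis
  proof (intro exI allI impI)
    fix m assume mM: "m \<ge> M"
    have m1: "m \<ge> 1" using mM by (simp add: M_def)
    have mr: "real m > 0" using m1 by simp
    have mpd: "real m \<ge> pi / d"
    proof -
      have "pi / d \<le> real_of_int \<lceil>pi / d\<rceil>" by simp
      also have "\<dots> \<le> real M" using d by (simp add: M_def)
      also have "\<dots> \<le> real m" using mM by simp
      finally show ?thesis .
    qed
    define x where "x = pi / (2 * real m)"
    have xd: "x \<le> d / 2"
    proof -
      have "pi \<le> real m * d" using mpd d by (simp add: field_simps)
      then show ?thesis using mr by (simp add: x_def field_simps)
    qed
    define \<beta> where "\<beta> = \<epsilon> / real m"
    have \<beta>0: "\<beta> > 0" using \<epsilon> mr by (simp add: \<beta>_def)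
    obtain M2 where M2': "\<forall>n\<ge>M2. norm (b n - 0) < \<beta>" using bl \<beta>0 unfolding LIMSEQ_iff by blast
    have M2: "\<bar>b n\<bar> \<le> \<beta>" if "n \<ge> M2" for n using M2' that by (simp add: less_imp_le)
    define h where "h = min (1 / (2 * real m)) (min (d / 2) (1 / (real M2 + 1)))"
    have h0: "h > 0" using mr d by (simp add: h_def)
    have h1: "h \<le> 1 / (2 * real m)" "h \<le> d / 2" "h \<le> 1 / (real M2 + 1)" by (auto simp: h_def)
    have hle1: "h \<le> 1"
    proof -
      have "1 / (2 * real m) \<le> 1" using mr m1 by (simp add: field_simps)
      then show ?thesis using h1 by linarith
    qed
    have h2m: "2 * real m * h \<le> 1" using h1(1) mr by (simp add: field_simps)
    have h2x: "2 * h < x"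
    proof -
      have "2 * h \<le> 1 / real m" using h1(1) mr by (simp add: field_simps)
      also have "1 / real m < pi / (2 * real m)" using mr pi_gt3 by (simp add: field_simps)
      finally show ?thesis by (simp add: x_def)
    qed
    have xhd: "x + h \<le> d" using xd h1(2) by linarith
    have tail: "\<bar>b n\<bar> \<le> \<beta>" if "n > nat \<lfloor>pi / h\<rfloor>" for n
    proof -
      have "real M2 + 1 \<le> 1 / h" using h1(3) h0 by (simp add: field_simps)
      also have "1 / h \<le> pi / h" using h0 pi_gt3 by (intro divide_right_mono) auto
      finally have "real M2 + 1 \<le> pi / h" .
      then have "int M2 + 1 \<le> \<lfloor>pi / h\<rfloor>" by (simp add: le_floor_iff)
      then have "M2 \<le> nat \<lfloor>pi / h\<rfloor>" by linarith
      then show ?thesis using M2 that by simp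
    qed
    have L: "h / (2 * real m) * (\<Sum>n=m..2*m. b n)
          \<le> (\<Sum>n. 2 * b n * sin (real n * h) * (1 - cos (real n * x)) / (real n)^2) + 4 * \<beta> * h"
      by (rule lower_pos[OF nonneg B h0 hle1 m1 h2m x_def tail])
    have C: "(\<Sum>n. 2 * b n * sin (real n * h) * (1 - cos (real n * x)) / (real n)^2)
          = (Fs b h - Fs b (-h)) - (Fs b (x+h) - Fs b (x-h))"
      by (rule sums_unique[OF series_C[OF B], symmetric])
    have Q: "(Fs b h - Fs b (-h)) - (Fs b (x+h) - Fs b (x-h)) \<le> 2 * h * \<epsilon> * x"
      by (rule Q_ineq[OF B fs d fe h0 h2x xhd])
    have "h / (2 * real m) * (\<Sum>n=m..2*m. b n) \<le> 2 * h * \<epsilon> * x + 4 * \<beta> * h"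
      using L C Q by linarith
    also have "2 * h * \<epsilon> * x + 4 * \<beta> * h = h / (2 * real m) * ((2*pi+8) * \<epsilon>)"
      using mr by (simp add: x_def \<beta>_def field_simps)
    finally have le: "h / (2 * real m) * (\<Sum>n=m..2*m. b n) \<le> h / (2 * real m) * ((2*pi+8) * \<epsilon>)" .
    have pos: "h / (2 * real m) > 0" using h0 mr by simp
    show "(\<Sum>n=m..2*m. b n) \<le> (2*pi+8) * \<epsilon>" by (rule iffD1[OF mult_le_cancel_left_pos[OF pos] le])
  qed
qed

lemma nb_to_0:
  fixes b :: "nat \<Rightarrow> real"
  assumes K: "\<And>m. m \<ge> 1 \<Longrightarrow> (\<Sum>n=m..2*m. \<bar>b n - b (Suc n)\<bar>) \<le> K * (\<bar>b m\<bar> + \<bar>b (2*m)\<bar>)"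
    and Kpos: "K \<ge> 0"
    and nonneg: "\<And>n. n \<ge> 1 \<Longrightarrow> b n \<ge> 0"
    and blk: "\<And>\<epsilon>. \<epsilon> > 0 \<Longrightarrow> \<exists>M. \<forall>m\<ge>M. (\<Sum>n=m..2*m. b n) \<le> \<epsilon>"
  shows "(\<lambda>n. real n * b n) \<longlonglongrightarrow> 0"
  unfolding LIMSEQ_iff
proof (intro allI impI)
  fix r :: real assume r: "r > 0"
  define \<epsilon> where "\<epsilon> = r / (4 * (2*K+1))"
  have \<epsilon>0: "\<epsilon> > 0" using r Kpos by (simp add: \<epsilon>_def)
  have K1: "2*K+1 > 0" using Kpos by simp
  have "2 * ((2*K+1) * \<epsilon>) = r / 2" using K1 by (simp add: \<epsilon>_def field_simps)
  then have \<epsilon>r: "2 * ((2*K+1) * \<epsilon>) < r" using r by simp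
  obtain M where M: "\<And>m. m \<ge> M \<Longrightarrow> (\<Sum>n=m..2*m. b n) \<le> \<epsilon>" using blk[OF \<epsilon>0] by blast
  show "\<exists>no. \<forall>k\<ge>no. norm (real k * b k - 0) < r"
  proof (intro exI allI impI)
    fix k assume k: "k \<ge> 2*M + 2"
    define j0 where "j0 = (k+1) div 2"
    have j0: "j0 \<ge> 1" "j0 \<ge> M" "j0 \<le> k" "k \<le> 2*j0" "k \<le> 2 * (k - j0 + 1)"
      using k unfolding j0_def by presburger+
    define J where "J = {j0..k}"
    have cardJ: "card J = k - j0 + 1" using j0 by (simp add: J_def)
    have each: "b k \<le> (K+1) * b j + K * b (2*j)" if "j \<in> J" for j
    proof -
      have jj: "j \<ge> 1" "j \<le> k" "k \<le> 2*j" using that j0 by (auto simp: J_def)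
      have "\<bar>b k\<bar> \<le> (K+1) * \<bar>b j\<bar> + K * \<bar>b (2*j)\<bar>" by (rule bk_le[OF K jj])
      moreover have "\<bar>b k\<bar> = b k" "\<bar>b j\<bar> = b j" "\<bar>b (2*j)\<bar> = b (2*j)" using nonneg jj by auto
      ultimately show ?thesis by simp
    qed
    have s1: "(\<Sum>j\<in>J. b j) \<le> \<epsilon>"
    proof -
      have "(\<Sum>j\<in>J. b j) \<le> (\<Sum>n=j0..2*j0. b n)"
        by (rule sum_mono2) (use j0 nonneg in \<open>auto simp: J_def\<close>)
      also have "\<dots> \<le> \<epsilon>" using M j0 by simp
      finally show ?thesis .
    qed
    have s2: "(\<Sum>j\<in>J. b (2*j)) \<le> \<epsilon>"
    proof -
      have "(\<Sum>j\<in>J. b (2*j)) = (\<Sum>n\<in>(\<lambda>j. 2*j) ` J. b n)"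
        by (rule sum.reindex[symmetric, unfolded o_def]) (simp add: inj_on_def)
      also have "\<dots> \<le> (\<Sum>n=2*j0..2*(2*j0). b n)"
        by (rule sum_mono2) (use j0 nonneg in \<open>auto simp: J_def\<close>)
      also have "\<dots> \<le> \<epsilon>" using M[of "2*j0"] j0 by simp
      finally show ?thesis .
    qed
    have "real (card J) * b k = (\<Sum>j\<in>J. b k)" by simp
    also have "\<dots> \<le> (\<Sum>j\<in>J. (K+1) * b j + K * b (2*j))" by (rule sum_mono) (rule each)
    also have "\<dots> = (K+1) * (\<Sum>j\<in>J. b j) + K * (\<Sum>j\<in>J. b (2*j))"
      by (simp add: sum.distrib sum_distrib_left)
    also have "\<dots> \<le> (K+1) * \<epsilon> + K * \<epsilon>" using s1 s2 Kpos by (intro add_mono mult_left_mono) auto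
    finally have cb: "real (card J) * b k \<le> (2*K+1) * \<epsilon>" by (simp add: algebra_simps)
    have bk0: "b k \<ge> 0" using nonneg k by simp
    have "k \<le> 2 * card J" using j0(5) cardJ by simp
    then have "real k \<le> real (2 * card J)" by (simp only: of_nat_le_iff)
    then have "real k \<le> 2 * real (card J)" by simp
    then have "real k * b k \<le> 2 * real (card J) * b k" using bk0 by (intro mult_right_mono) auto
    also have "\<dots> \<le> 2 * ((2*K+1) * \<epsilon>)" using cb by simp
    finally have "real k * b k < r" using \<epsilon>r by linarith
    then show "norm (real k * b k - 0) < r" using bk0 by simp
  qed
qed

lemma partial_sums_eq: "(\<Sum>n<Suc N. b n * sin (real n * y)) = sin_partial b N y"
  by (induction N) (simp_all add: sin_partial_def)

lemma conv_sums:
  assumes "convergent (\<lambda>N. sin_partial b N y)"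
  shows "(\<lambda>n. b n * sin (real n * y)) sums lim (\<lambda>N. sin_partial b N y)"
proof -
  define L where "L = lim (\<lambda>N. sin_partial b N y)"
  have "(\<lambda>N. sin_partial b N y) \<longlonglongrightarrow> L"
    using assms by (simp add: convergent_LIMSEQ_iff L_def)
  moreover have eqf: "(\<lambda>N. sin_partial b N y) = (\<lambda>N. \<Sum>n<Suc N. b n * sin (real n * y))"
    by (simp only: partial_sums_eq)
  ultimately have "(\<lambda>N. \<Sum>n<Suc N. b n * sin (real n * y)) \<longlonglongrightarrow> L" by simp
  then have "(\<lambda>N. \<Sum>n<N. b n * sin (real n * y)) \<longlonglongrightarrow> L"
    by (simp only: filterlim_sequentially_Suc[of "\<lambda>N. \<Sum>n<N. b n * sin (real n * y)"])
  then show ?thesis by (simp add: sums_def L_def)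
qed

lemma norm_cdiff: "norm (complex_of_real a - complex_of_real c) = \<bar>a - c\<bar>"
  by (simp flip: of_real_diff)

lemma nbvs_real:
  assumes "NBVS (\<lambda>n. complex_of_real (b n))"
  shows "\<exists>K>0. \<forall>m\<ge>1. (\<Sum>n=m..2*m. \<bar>b n - b (Suc n)\<bar>) \<le> K * (\<bar>b m\<bar> + \<bar>b (2*m)\<bar>)"
  using assms unfolding NBVS_def by (simp only: norm_cdiff norm_of_real)

theorem theorem3:
  fixes b :: "nat \<Rightarrow> real"
  assumes nonneg: "\<forall>n\<ge>1. b n \<ge> 0"
    and nbvs: "NBVS (\<lambda>n. complex_of_real (b n))"
  shows "(uniformly_convergent_on UNIV (sin_partial b)
            \<longleftrightarrow> (\<lambda>n. real n * b n) \<longlonglongrightarrow> 0)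
       \<and> ((\<forall>x. convergent (\<lambda>N. sin_partial b N x)) \<longrightarrow>
            (continuous_on UNIV (\<lambda>x. lim (\<lambda>N. sin_partial b N x))
              \<longleftrightarrow> (\<lambda>n. real n * b n) \<longlonglongrightarrow> 0))"
proof -
  obtain K where K0: "K > 0" and K: "\<And>m. m \<ge> 1 \<Longrightarrow> (\<Sum>n=m..2*m. \<bar>b n - b (Suc n)\<bar>) \<le> K * (\<bar>b m\<bar> + \<bar>b (2*m)\<bar>)"
    using nbvs_real[OF nbvs] by blast
  have Kpos: "K \<ge> 0" using K0 by simp
  have nn: "\<And>n. n \<ge> 1 \<Longrightarrow> b n \<ge> 0" using nonneg by simp
  have A: "uniformly_convergent_on UNIV (sin_partial b)" if "(\<lambda>n. real n * b n) \<longlonglongrightarrow> 0"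
    by (rule unif_conv[OF K Kpos that])
  have U: "(\<forall>x. convergent (\<lambda>N. sin_partial b N x)) \<and> continuous_on UNIV (\<lambda>x. lim (\<lambda>N. sin_partial b N x))"
    if uc: "uniformly_convergent_on UNIV (sin_partial b)"
  proof -
    obtain l where ul: "uniform_limit UNIV (sin_partial b) l sequentially"
      using uc unfolding uniformly_convergent_on_def by blast
    have pw: "(\<lambda>N. sin_partial b N x) \<longlonglongrightarrow> l x" for x
      by (rule tendsto_uniform_limitI[OF ul]) simp
    have cl: "continuous_on UNIV l"
    proof (rule uniform_limit_theorem[OF _ ul])
      show "\<forall>\<^sub>F n in sequentially. continuous_on UNIV (sin_partial b n)"
        unfolding sin_partial_def by (intro always_eventually allI) (intro continuous_intros)
    qed simp
    have "(\<lambda>x. lim (\<lambda>N. sin_partial b N x)) = l" using pw by (simp add: fun_eq_iff limI)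
    then show ?thesis using pw cl by (auto simp: convergent_def)
  qed
  have Bd: "(\<lambda>n. real n * b n) \<longlonglongrightarrow> 0"
    if conv: "\<forall>x. convergent (\<lambda>N. sin_partial b N x)"
      and cont: "continuous_on UNIV (\<lambda>x. lim (\<lambda>N. sin_partial b N x))"
  proof -
    define f where "f x = lim (\<lambda>N. sin_partial b N x)" for x
    have fs: "(\<lambda>n. b n * sin (real n * y)) sums f y" for y
      unfolding f_def by (rule conv_sums) (use conv in auto)
    have bl: "b \<longlonglongrightarrow> 0" by (rule b_to_0[OF K Kpos]) (use conv in auto)
    have fc: "isCont f 0"
    proof -
      have "continuous_on UNIV f" using cont by (simp add: f_def[abs_def])
      then show ?thesis using continuous_on_eq_continuous_at[of UNIV f] by simp
    qed
    have f0: "f 0 = 0"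
    proof -
      have "(\<lambda>N. sin_partial b N 0) = (\<lambda>N. 0)" by (simp add: sin_partial_def fun_eq_iff)
      then show ?thesis by (simp add: f_def)
    qed
    show ?thesis
    proof (rule nb_to_0[OF K Kpos nn])
      fix \<epsilon> :: real assume \<epsilon>: "\<epsilon> > 0"
      define \<epsilon>' where "\<epsilon>' = \<epsilon> / (2*pi+8)"
      have \<epsilon>': "\<epsilon>' > 0" using \<epsilon> pi_gt3 by (simp add: \<epsilon>'_def)
      have e: "(2*pi+8) * \<epsilon>' = \<epsilon>" using pi_gt3 by (simp add: \<epsilon>'_def)
      show "\<exists>M. \<forall>m\<ge>M. (\<Sum>n=m..2*m. b n) \<le> \<epsilon>"
        using block_small[OF nn bl fs fc f0 \<epsilon>'] unfolding e .
    qed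
  qed
  show ?thesis
  proof (intro conjI impI iffI)
    assume "uniformly_convergent_on UNIV (sin_partial b)"
    then show "(\<lambda>n. real n * b n) \<longlonglongrightarrow> 0" using U Bd by blast
  next
    assume "(\<lambda>n. real n * b n) \<longlonglongrightarrow> 0"
    then show "uniformly_convergent_on UNIV (sin_partial b)" by (rule A)
  next
    assume "\<forall>x. convergent (\<lambda>N. sin_partial b N x)"
      and "continuous_on UNIV (\<lambda>x. lim (\<lambda>N. sin_partial b N x))"
    then show "(\<lambda>n. real n * b n) \<longlonglongrightarrow> 0" by (rule Bd)
  next
    assume "(\<lambda>n. real n * b n) \<longlonglongrightarrow> 0"
    then show "continuous_on UNIV (\<lambda>x. lim (\<lambda>N. sin_partial b N x))" using A U by blast
  qed
qed


end
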